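(* Let $T$ be a tree. Two elements $\mathfrak p,\mathfrak p'\in\mathfrak P_T$ satisfy $\mathfrak p\ge\mathfrak p'$ if and only if $\mathsf L_T(\mathfrak p')$ intersects the closure of $\mathsf L_T(\mathfrak p)$ in $\mathsf L_T$. If this holds, then $\mathsf L_T(\mathfrak p')$ is contained in the closure of $\mathsf L_T(\mathfrak p)$.
   Context: A tree is a nonempty finite connected acyclic graph with vertex set $V(T)$ and edge set $E(T)$ (two-element subsets of $V(T)$). Subgraphs are full (vertex-induced); a subtree is a subgraph which is a tree. A quotient tree $S\twoheadrightarrow R$ is a tree $R$ with a surjection $V(S)\to V(R)$ whose fibers are vertex sets of subtrees, vertices of $R$ adjacent iff an edge of $S$ joins their fibers. Arboreal singularity: for $\alpha\in V(T)$ let $\mathsf L_T(\alpha)=\mathbb R^{V(T)\setminus\{\alpha\}}$ with coordinates $x_\gamma(\alpha)$; $\mathsf L_T$ is the quotient of $\coprod_\alpha\mathsf L_T(\alpha)$ by the equivalence relation generated by identifying, for each edge $\{\alpha,\beta\}$, $\{x_\gamma(\alpha)\}\sim\{x_\gamma(\beta)\}$ whenever $x_\beta(\alpha)=x_\alpha(\beta)\ge0$ and $x_\gamma(\alpha)=x_\gamma(\beta)$ for $\gamma\ne\alpha,\beta$; each $\mathsf L_T(\alpha)$ is regarded as a subspace of $\mathsf L_T$. For $x\in\mathsf L_T$: $S_x$ is the full subgraph on $\{\alpha:x\in\mathsf L_T(\alpha)\}$, and $R_x$ is the quotient of $S_x$ contracting exactly the edges $\{\alpha,\beta\}\in E(S_x)$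 with $x_\beta(\alpha)=x_\alpha(\beta)>0$ at $x$. Poset $\mathfrak P_T$: elements are correspondences $\mathfrak p=(R\overset{q}{\twoheadleftarrow}S\overset{i}{\hookrightarrow}T)$, $i$ inclusion of a subtree, $q$ a quotient of trees (equivalently a subtree $S$ with a partition of $S$ into subtrees). Composition: for $\mathfrak q=(P\twoheadleftarrow Q\hookrightarrow R)$, $\mathfrak q\circ\mathfrak p=(P\twoheadleftarrow Q\times_RS\hookrightarrow T)$, where $Q\times_RS$ is the subtree of $S$ on vertices mapping into $Q$, included in $T$ via $S$ and mapped to $P$ via $Q$. Order: $\mathfrak p\ge\mathfrak p'$ iff $\mathfrak p=\mathfrak q\circ\mathfrak p'$ for some correspondence $\mathfrak q$ of the same kind. $\mathsf L_T(\mathfrak p)=\{x:(R_x\twoheadleftarrow S_x\hookrightarrow T)=\mathfrak p\}$. *)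

theory Defs
  imports "HOL-Analysis.Analysis" "HOL-Library.Disjoint_Sets"
begin

definition edges_ok :: "'v set \<Rightarrow> 'v set set \<Rightarrow> bool" where
  "edges_ok V E \<longleftrightarrow> (\<forall>e\<in>E. \<exists>a b. a \<noteq> b \<and> a \<in> V \<and> b \<in> V \<and> e = {a, b})"

definition is_walk :: "'v set set \<Rightarrow> 'v list \<Rightarrow> bool" where
  "is_walk E xs \<longleftrightarrow> xs \<noteq> [] \<and> (\<forall>i. Suc i < length xs \<longrightarrow> {xs ! i, xs ! Suc i} \<in> E)"

definition graph_connected :: "'v set \<Rightarrow> 'v set set \<Rightarrow> bool" where
  "graph_connected V E \<longleftrightarrow>
     (\<forall>a\<in>V. \<forall>b\<in>V. \<exists>xs. is_walk E xs \<and> set xs \<subseteq> V \<and> hd xs = a \<and> last xs = b)"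

definition is_cycle :: "'v set \<Rightarrow> 'v set set \<Rightarrow> 'v list \<Rightarrow> bool" where
  "is_cycle V E xs \<longleftrightarrow> length xs \<ge> 3 \<and> distinct xs \<and> set xs \<subseteq> V \<and> is_walk E xs
      \<and> {last xs, hd xs} \<in> E"

definition acyclic_graph :: "'v set \<Rightarrow> 'v set set \<Rightarrow> bool" where
  "acyclic_graph V E \<longleftrightarrow> (\<nexists>xs. is_cycle V E xs)"

definition is_tree :: "'v set \<Rightarrow> 'v set set \<Rightarrow> bool" where
  "is_tree V E \<longleftrightarrow> V \<noteq> {} \<and> finite V \<and> edges_ok V E \<and> graph_connected V E \<and> acyclic_graph V E"

definition induced_edges :: "'v set set \<Rightarrow> 'v set \<Rightarrow> 'v set set" where
  "induced_edges E S = {e \<in> E. e \<subseteq> S}"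

definition is_subtree :: "'v set \<Rightarrow> 'v set set \<Rightarrow> 'v set \<Rightarrow> bool" where
  "is_subtree V E S \<longleftrightarrow> S \<subseteq> V \<and> is_tree S (induced_edges E S)"

definition quot_edges :: "'v set set \<Rightarrow> 'v set set \<Rightarrow> 'v set set set" where
  "quot_edges E P = {{B1, B2} | B1 B2. B1 \<in> P \<and> B2 \<in> P \<and> B1 \<noteq> B2 \<and>
                         (\<exists>a\<in>B1. \<exists>b\<in>B2. {a, b} \<in> E)}"

text \<open>A correspondence R <<- S -> T is encoded by the vertex set S of a subtree of T
  together with a partition P of S into subtrees (the fibres of S ->> R).\<close>
definition is_corr :: "'v set \<Rightarrow> 'v set set \<Rightarrow> 'v set \<times> 'v set set \<Rightarrow> bool" where
  "is_corr V E p \<longleftrightarrow> is_subtree V E (fst p) \<and> partition_on (fst p) (snd p)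
      \<and> (\<forall>B\<in>snd p. is_subtree V E B)"

text \<open>Composition q o p for q = (P <<- Q -> R) a correspondence on the quotient tree R of p:
  Q x_R S is the union of the blocks in Q, and its fibre over a vertex of P is the union of
  the blocks of p lying in the corresponding fibre of q.\<close>
definition corr_comp :: "'v set set \<times> 'v set set set \<Rightarrow> 'v set \<times> 'v set set \<Rightarrow> 'v set \<times> 'v set set" where
  "corr_comp q p = (\<Union>(fst q), Union ` (snd q))"

definition corr_ge :: "'v set set \<Rightarrow> 'v set \<times> 'v set set \<Rightarrow> 'v set \<times> 'v set set \<Rightarrow> bool" where
  "corr_ge E p p' \<longleftrightarrow>
     (\<exists>q. is_corr (snd p') (quot_edges E (snd p')) q \<and> p = corr_comp q p')"

definition quotient_topology :: "'a topology \<Rightarrow> ('a \<times> 'a) set \<Rightarrow> 'a set topology" where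
  "quotient_topology X r = topology (\<lambda>U. U \<subseteq> topspace X // r \<and>
       openin X {z \<in> topspace X. r `` {z} \<in> U})"

lemma istopology_quotient:
  "istopology (\<lambda>U. U \<subseteq> topspace X // r \<and> openin X {z \<in> topspace X. r `` {z} \<in> U})"
proof -
  have 1: "{z \<in> topspace X. r `` {z} \<in> S \<inter> T} =
           {z \<in> topspace X. r `` {z} \<in> S} \<inter> {z \<in> topspace X. r `` {z} \<in> T}" for S T
    by auto
  have 2: "{z \<in> topspace X. r `` {z} \<in> \<Union>K} = (\<Union>U\<in>K. {z \<in> topspace X. r `` {z} \<in> U})" for K
    by auto
  show ?thesis
    unfolding istopology_def using 1 2 by (auto intro!: openin_Union)
qed

text \<open>Points of the disjoint union of the L_T(alpha): pairs (alpha, x) with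
  x in R^(V - {alpha}) (extensional functions).\<close>
definition arb_disj :: "'v set \<Rightarrow> ('v \<times> ('v \<Rightarrow> real)) topology" where
  "arb_disj V = sum_topology (\<lambda>\<alpha>. product_topology (\<lambda>_. euclideanreal) (V - {\<alpha>})) V"

definition arb_gen :: "'v set \<Rightarrow> 'v set set \<Rightarrow> (('v \<times> ('v \<Rightarrow> real)) \<times> ('v \<times> ('v \<Rightarrow> real))) set" where
  "arb_gen V E = {((\<alpha>, x), (\<beta>, y)). (\<alpha>, x) \<in> topspace (arb_disj V) \<and> (\<beta>, y) \<in> topspace (arb_disj V)
      \<and> {\<alpha>, \<beta>} \<in> E \<and> \<alpha> \<noteq> \<beta> \<and> x \<beta> = y \<alpha> \<and> x \<beta> \<ge> 0
      \<and> (\<forall>\<gamma>\<in>V - {\<alpha>, \<beta>}. x \<gamma> = y \<gamma>)}"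

definition arb_rel :: "'v set \<Rightarrow> 'v set set \<Rightarrow> (('v \<times> ('v \<Rightarrow> real)) \<times> ('v \<times> ('v \<Rightarrow> real))) set" where
  "arb_rel V E = Id_on (topspace (arb_disj V)) \<union> (arb_gen V E \<union> (arb_gen V E)\<inverse>)\<^sup>+"

definition arb_space :: "'v set \<Rightarrow> 'v set set \<Rightarrow> ('v \<times> ('v \<Rightarrow> real)) set topology" where
  "arb_space V E = quotient_topology (arb_disj V) (arb_rel V E)"

text \<open>S_x: vertices alpha with x in L_T(alpha).\<close>
definition S_pt :: "'v set \<Rightarrow> ('v \<times> ('v \<Rightarrow> real)) set \<Rightarrow> 'v set" where
  "S_pt V c = {\<alpha>\<in>V. \<exists>u. (\<alpha>, u) \<in> c}"

definition contr_rel :: "'v set \<Rightarrow> 'v set set \<Rightarrow> ('v \<times> ('v \<Rightarrow> real)) set \<Rightarrow> ('v \<times> 'v) set" where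
  "contr_rel V E c = {(\<alpha>, \<beta>). \<alpha> \<in> S_pt V c \<and> \<beta> \<in> S_pt V c \<and> {\<alpha>, \<beta>} \<in> E \<and>
      (\<exists>u v. (\<alpha>, u) \<in> c \<and> (\<beta>, v) \<in> c \<and> u \<beta> = v \<alpha> \<and> u \<beta> > 0)}"

text \<open>The correspondence (R_x <<- S_x -> T) of a point x, encoded as (S_x, fibres of S_x ->> R_x).\<close>
definition corr_pt :: "'v set \<Rightarrow> 'v set set \<Rightarrow> ('v \<times> ('v \<Rightarrow> real)) set \<Rightarrow> 'v set \<times> 'v set set" where
  "corr_pt V E c = (S_pt V c, S_pt V c // ((contr_rel V E c)\<^sup>*))"

definition stratum :: "'v set \<Rightarrow> 'v set set \<Rightarrow> 'v set \<times> 'v set set \<Rightarrow> ('v \<times> ('v \<Rightarrow> real)) set set" where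
  "stratum V E p = {c \<in> topspace (arb_space V E). corr_pt V E c = p}"

end

theory Submission imports Defs "HOL-Library.Transitive_Closure_Table" begin


definition adj :: "'v set set \<Rightarrow> ('v \<times> 'v) set" where
  "adj F = {(a,b). {a,b} \<in> F}"

lemma adj_iff[simp]: "(a,b) \<in> adj F \<longleftrightarrow> {a,b} \<in> F" by (simp add: adj_def)

lemma adj_conv: "(adj F)\<inverse> = adj F"
  by (auto simp: adj_def insert_commute)

lemma rtr_sym: "(a,b) \<in> (adj F)\<^sup>* \<Longrightarrow> (b,a) \<in> (adj F)\<^sup>*"
  by (metis adj_conv rtrancl_converseI)

lemma rtr_mono: "F \<subseteq> G \<Longrightarrow> (a,b) \<in> (adj F)\<^sup>* \<Longrightarrow> (a,b) \<in> (adj G)\<^sup>*"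
proof -
  assume "F \<subseteq> G" "(a,b) \<in> (adj F)\<^sup>*"
  moreover have "adj F \<subseteq> adj G" using \<open>F \<subseteq> G\<close> by (auto simp: adj_def)
  ultimately show ?thesis using rtrancl_mono by blast
qed

lemma walk_rtr: "is_walk F xs \<Longrightarrow> (hd xs, last xs) \<in> (adj F)\<^sup>*"
proof (induction xs)
  case Nil then show ?case by (simp add: is_walk_def)
next
  case (Cons a ys)
  show ?case
  proof (cases "ys = []")
    case True then show ?thesis by simp
  next
    case False
    have e: "{a, hd ys} \<in> F" using Cons.prems False
      by (auto simp: is_walk_def hd_conv_nth)
    have "is_walk F ys" using Cons.prems False unfolding is_walk_def
      by (metis Suc_less_eq length_Cons nth_Cons_Suc)
    then have "(hd ys, last ys) \<in> (adj F)\<^sup>*" by (rule Cons.IH)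
    with e show ?thesis using False by (simp add: converse_rtrancl_into_rtrancl)
  qed
qed

lemma rtr_walk:
  assumes "(a,b) \<in> (adj F)\<^sup>*"
  shows "\<exists>xs. is_walk F xs \<and> hd xs = a \<and> last xs = b \<and> set xs \<subseteq> insert a (\<Union>F)"
  using assms
proof (induction rule: rtrancl_induct)
  case base
  then show ?case by (rule exI[of _ "[a]"]) (simp add: is_walk_def)
next
  case (step b c)
  then obtain xs where xs: "is_walk F xs" "hd xs = a" "last xs = b" "set xs \<subseteq> insert a (\<Union>F)" by blast
  have ne: "xs \<noteq> []" using xs by (simp add: is_walk_def)
  have "is_walk F (xs @ [c])"
    unfolding is_walk_def
  proof (intro conjI allI impI)
    fix i assume i: "Suc i < length (xs @ [c])"
    show "{(xs @ [c]) ! i, (xs @ [c]) ! Suc i} \<in> F"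
    proof (cases "Suc i < length xs")
      case True then show ?thesis using xs(1) by (simp add: is_walk_def nth_append)
    next
      case False
      then have "Suc i = length xs" using i by simp
      then have "i = length xs - 1" by simp
      then show ?thesis using step(2) xs(3) ne
        by (simp add: nth_append last_conv_nth)
    qed
  qed simp
  moreover have "set (xs @ [c]) \<subseteq> insert a (\<Union>F)" using xs(4) step(2) by auto
  ultimately show ?case using xs ne by (intro exI[of _ "xs @ [c]"]) auto
qed

lemma conn_rtr: "graph_connected W F \<Longrightarrow> a \<in> W \<Longrightarrow> b \<in> W \<Longrightarrow> (a,b) \<in> (adj F)\<^sup>*"
proof -
  assume "graph_connected W F" "a \<in> W" "b \<in> W"
  then obtain xs where "is_walk F xs" "hd xs = a" "last xs = b" unfolding graph_connected_def by meson
  with walk_rtr[OF this(1)] show ?thesis by simp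
qed

lemma rtr_conn:
  assumes "\<Union>F \<subseteq> W" "\<And>a b. a \<in> W \<Longrightarrow> b \<in> W \<Longrightarrow> (a,b) \<in> (adj F)\<^sup>*"
  shows "graph_connected W F"
  unfolding graph_connected_def
proof (intro ballI)
  fix a b assume ab: "a \<in> W" "b \<in> W"
  from rtr_walk[OF assms(2)[OF ab]] obtain xs where
    "is_walk F xs" "hd xs = a" "last xs = b" "set xs \<subseteq> insert a (\<Union>F)" by blast
  moreover have "set xs \<subseteq> W" using \<open>set xs \<subseteq> insert a (\<Union>F)\<close> assms(1) ab by auto
  ultimately show "\<exists>xs. is_walk F xs \<and> set xs \<subseteq> W \<and> hd xs = a \<and> last xs = b"
    by (intro exI[of _ xs]) simp
qed

lemma rpath_props:
  "rtrancl_path r a ys b \<Longrightarrow> last (a#ys) = b \<and> (\<forall>i. Suc i < length (a#ys) \<longrightarrow> r ((a#ys)!i) ((a#ys)!Suc i))"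
proof (induction rule: rtrancl_path.induct)
  case (base x) then show ?case by simp
next
  case (step x y ys z)
  show ?case
  proof (intro conjI allI impI)
    show "last (x # y # ys) = z" using step by simp
    fix i assume "Suc i < length (x # y # ys)"
    then show "r ((x # y # ys) ! i) ((x # y # ys) ! Suc i)"
    proof (cases i)
      case 0 then show ?thesis using step(1) by simp
    next
      case (Suc j)
      then have "Suc j < length (y # ys)" using \<open>Suc i < _\<close> by simp
      then have "r ((y#ys)!j) ((y#ys)!Suc j)" using step(3) by blast
      then show ?thesis using Suc by simp
    qed
  qed
qed

lemma rtr_rpath: "(a,b) \<in> R\<^sup>* \<Longrightarrow> \<exists>ys. rtrancl_path (\<lambda>x y. (x,y) \<in> R) a ys b \<and> distinct (a#ys)"
proof -
  assume "(a,b) \<in> R\<^sup>*"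
  then have "(\<lambda>x y. (x,y) \<in> R)\<^sup>*\<^sup>* a b" by (simp add: rtranclp_rtrancl_eq)
  then obtain xs where "rtrancl_path (\<lambda>x y. (x,y) \<in> R) a xs b" unfolding rtranclp_eq_rtrancl_path by blast
  then obtain xs' where "rtrancl_path (\<lambda>x y. (x,y) \<in> R) a xs' b" "distinct (a # xs')"
    by (rule rtrancl_path_distinct)
  then show ?thesis by blast
qed

lemma rpath_rtr: "rtrancl_path (\<lambda>x y. (x,y) \<in> R) a ys b \<Longrightarrow> (a,b) \<in> R\<^sup>*"
proof -
  assume "rtrancl_path (\<lambda>x y. (x,y) \<in> R) a ys b"
  then have "(\<lambda>x y. (x,y) \<in> R)\<^sup>*\<^sup>* a b" unfolding rtranclp_eq_rtrancl_path by blast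
  then show ?thesis by (simp add: rtranclp_rtrancl_eq)
qed

lemma edge_ok: "edges_ok V E \<Longrightarrow> {a,b} \<in> E \<Longrightarrow> a \<noteq> b \<and> a \<in> V \<and> b \<in> V"
proof -
  assume "edges_ok V E" "{a,b} \<in> E"
  then obtain c d where "c \<noteq> d" "c \<in> V" "d \<in> V" "{a,b} = {c,d}" unfolding edges_ok_def by meson
  then show ?thesis by (auto simp: doubleton_eq_iff)
qed

lemma edge_inV: "edges_ok V E \<Longrightarrow> e \<in> E \<Longrightarrow> e \<subseteq> V"
proof -
  assume "edges_ok V E" "e \<in> E"
  then obtain a b where "a \<in> V" "b \<in> V" "e = {a,b}" unfolding edges_ok_def by meson
  then show ?thesis by simp
qed

lemma rtr_inV: assumes "edges_ok V E" "F \<subseteq> E" "(a,b) \<in> (adj F)\<^sup>*" "a \<in> V" shows "b \<in> V"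
  using assms(3,4)
proof (induction rule: rtrancl_induct)
  case base then show ?case by simp
next
  case (step y z)
  then have "{y,z} \<in> E" using assms(2) by auto
  from edge_ok[OF assms(1) this] show ?case by simp
qed

lemma bridge:
  assumes T: "is_tree V E" and e: "{a,b} \<in> E"
  shows "(a,b) \<notin> (adj (E - {{a,b}}))\<^sup>*"
proof
  assume "(a,b) \<in> (adj (E - {{a,b}}))\<^sup>*"
  from rtr_rpath[OF this] obtain ys where p: "rtrancl_path (\<lambda>x y. (x,y) \<in> adj (E - {{a,b}})) a ys b" "distinct (a#ys)"
    by blast
  have eok: "edges_ok V E" using T by (simp add: is_tree_def)
  have ab: "a \<noteq> b" "a \<in> V" "b \<in> V" using edge_ok[OF eok e] by auto
  have pl: "last (a#ys) = b" using rpath_props[OF p(1)] by blast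
  have pr: "\<And>i. Suc i < length (a#ys) \<Longrightarrow> {(a#ys)!i, (a#ys)!Suc i} \<in> E - {{a,b}}"
    using rpath_props[OF p(1)] by simp
  have yne: "ys \<noteq> []" using pl ab(1) by (cases ys) simp_all
  have len: "length (a#ys) \<ge> 3"
  proof (rule ccontr)
    assume "\<not> ?thesis"
    then have "length ys = 1" using yne by (cases ys) (auto simp: Suc_le_eq)
    then obtain y where y: "ys = [y]" by (cases ys) (auto simp: Suc_le_eq)
    then have "y = b" using pl by simp
    have "{(a#ys)!0, (a#ys)!Suc 0} \<in> E - {{a,b}}" using pr[of 0] y by simp
    then show False using y \<open>y = b\<close> by simp
  qed
  have walk: "is_walk E (a#ys)" unfolding is_walk_def using pr by blast
  have setV: "set (a#ys) \<subseteq> V"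
  proof
    fix v assume "v \<in> set (a#ys)"
    then obtain i where i: "i < length (a#ys)" "(a#ys)!i = v" by (meson in_set_conv_nth)
    show "v \<in> V"
    proof (cases i)
      case 0 then show ?thesis using i ab by simp
    next
      case (Suc j)
      then have "{(a#ys)!j, v} \<in> E" using pr[of j] i by simp
      then show ?thesis using edge_ok[OF eok] by blast
    qed
  qed
  have cl: "{last (a#ys), hd (a#ys)} \<in> E" using pl e by (simp add: insert_commute)
  have "is_cycle V E (a#ys)" unfolding is_cycle_def using len p(2) setV walk cl by (intro conjI)
  moreover have "acyclic_graph V E" using T by (simp add: is_tree_def)
  ultimately show False unfolding acyclic_graph_def by blast
qed

lemma acyclic_crit:
  assumes "\<And>a b. {a,b} \<in> F \<Longrightarrow> a \<noteq> b \<Longrightarrow> (a,b) \<notin> (adj (F - {{a,b}}))\<^sup>*"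
  shows "acyclic_graph W F"
  unfolding acyclic_graph_def
proof
  assume "\<exists>xs. is_cycle W F xs"
  then obtain xs where c: "is_cycle W F xs" by blast
  let ?n = "length xs"
  have n: "?n \<ge> 3" "distinct xs" "is_walk F xs" "{last xs, hd xs} \<in> F"
    using c by (auto simp: is_cycle_def)
  have ne: "xs \<noteq> []" using n by auto
  have hl: "hd xs = xs!0" "last xs = xs!(?n - 1)" using ne by (auto simp: hd_conv_nth last_conv_nth)
  have dif: "last xs \<noteq> hd xs" unfolding hl using n by (subst nth_eq_iff_index_eq) auto
  have "is_walk (F - {{last xs, hd xs}}) xs"
    unfolding is_walk_def
  proof (intro conjI allI impI)
    show "xs \<noteq> []" by fact
    fix i assume i: "Suc i < ?n"
    have "{xs!i, xs!Suc i} \<noteq> {xs!(?n-1), xs!0}"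
    proof
      assume eq: "{xs!i, xs!Suc i} = {xs!(?n-1), xs!0}"
      have d1: "xs!i = xs!(?n-1) \<longleftrightarrow> i = ?n - 1" using nth_eq_iff_index_eq[OF n(2), of i "?n - 1"] i by simp
      have d2: "xs!i = xs!0 \<longleftrightarrow> i = 0" using nth_eq_iff_index_eq[OF n(2), of i 0] i ne by simp
      have d3: "xs!Suc i = xs!(?n-1) \<longleftrightarrow> Suc i = ?n - 1" using nth_eq_iff_index_eq[OF n(2), of "Suc i" "?n - 1"] i by simp
      have d4: "xs!Suc i = xs!0 \<longleftrightarrow> Suc i = 0" using nth_eq_iff_index_eq[OF n(2), of "Suc i" 0] i ne by simp
      from eq have "(xs!i = xs!(?n-1) \<and> xs!Suc i = xs!0) \<or> (xs!i = xs!0 \<and> xs!Suc i = xs!(?n-1))"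
        by (simp add: doubleton_eq_iff)
      then show False using d1 d2 d3 d4 n(1) i by linarith
    qed
    then show "{xs!i, xs!Suc i} \<in> F - {{last xs, hd xs}}" using n(3) i hl by (auto simp: is_walk_def)
  qed
  then have "(hd xs, last xs) \<in> (adj (F - {{last xs, hd xs}}))\<^sup>*" by (rule walk_rtr)
  then have "(last xs, hd xs) \<in> (adj (F - {{last xs, hd xs}}))\<^sup>*" by (rule rtr_sym)
  then show False using assms[OF n(4) dif] by blast
qed




locale tr =
  fixes V :: "'v set" and E :: "'v set set"
  assumes T: "is_tree V E"
begin

lemma eok: "edges_ok V E" using T by (simp add: is_tree_def)
lemma finV: "finite V" using T by (simp add: is_tree_def)
lemma connV: "graph_connected V E" using T by (simp add: is_tree_def)

lemma edgeE: assumes "e \<in> E" obtains a b where "e = {a,b}" "a \<noteq> b" "a \<in> V" "b \<in> V"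
proof -
  have "\<exists>a b. a \<noteq> b \<and> a \<in> V \<and> b \<in> V \<and> e = {a, b}" using assms eok unfolding edges_ok_def by simp
  then show ?thesis using that by blast
qed

definition R :: "'v set \<Rightarrow> 'v \<Rightarrow> 'v \<Rightarrow> bool" where
  "R e a c \<longleftrightarrow> (a,c) \<in> (adj (E - {e}))\<^sup>*"

lemma R_refl: "R e a a" by (simp add: R_def)

lemma bridge_gen: "{a,b} \<in> E \<Longrightarrow> F \<subseteq> E - {{a,b}} \<Longrightarrow> (a,b) \<notin> (adj F)\<^sup>*"
proof
  assume "{a,b} \<in> E" "F \<subseteq> E - {{a,b}}" "(a,b) \<in> (adj F)\<^sup>*"
  from rtr_mono[OF this(2,3)] show False using bridge[OF T \<open>{a,b} \<in> E\<close>] by simp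
qed

lemma split_reach:
  assumes "(u,c) \<in> (adj E)\<^sup>*" "e = {a,b}"
  shows "R e u c \<or> R e u a \<or> R e u b"
  using assms(1)
proof (induction rule: rtrancl_induct)
  case base then show ?case by (simp add: R_refl)
next
  case (step c d)
  show ?case
  proof (cases "{c,d} = e")
    case True
    then have "c = a \<or> c = b" using assms(2) by (auto simp: doubleton_eq_iff)
    then show ?thesis using step.IH by blast
  next
    case False
    then have "(c,d) \<in> adj (E - {e})" using step(2) by simp
    then show ?thesis using step.IH unfolding R_def by (meson rtrancl.rtrancl_into_rtrancl)
  qed
qed

lemma one_side:
  assumes e: "e \<in> E" "e = {a,b}" and al: "\<alpha> \<in> V"
  shows "R e \<alpha> a \<or> R e \<alpha> b" "\<not> (R e \<alpha> a \<and> R e \<alpha> b)"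
proof -
  have "a \<in> V" using edge_ok[OF eok] e by blast
  then have "(\<alpha>,a) \<in> (adj E)\<^sup>*" using conn_rtr[OF connV al] by blast
  from split_reach[OF this e(2)] show "R e \<alpha> a \<or> R e \<alpha> b"
    unfolding R_def by (meson rtrancl_trans)
  show "\<not> (R e \<alpha> a \<and> R e \<alpha> b)"
  proof
    assume "R e \<alpha> a \<and> R e \<alpha> b"
    then have "(a,b) \<in> (adj (E - {e}))\<^sup>*" unfolding R_def by (meson rtr_sym rtrancl_trans)
    then show False using bridge[OF T] e by simp
  qed
qed

definition far :: "'v \<Rightarrow> 'v set \<Rightarrow> 'v" where
  "far \<alpha> e = (THE c. c \<in> e \<and> \<not> R e \<alpha> c)"

lemma far_props:
  assumes "e \<in> E" "\<alpha> \<in> V"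
  shows "far \<alpha> e \<in> e" "\<not> R e \<alpha> (far \<alpha> e)" "\<And>c. c \<in> e \<Longrightarrow> c \<noteq> far \<alpha> e \<Longrightarrow> R e \<alpha> c"
    "far \<alpha> e \<noteq> \<alpha>" "far \<alpha> e \<in> V"
proof -
  obtain a b where ab: "e = {a,b}" "a \<noteq> b" "a \<in> V" "b \<in> V" using edgeE[OF assms(1)] by blast
  note os = one_side[OF assms(1) ab(1) assms(2)]
  have ex: "\<exists>!c. c \<in> e \<and> \<not> R e \<alpha> c" using os ab by auto
  then have fp: "far \<alpha> e \<in> e \<and> \<not> R e \<alpha> (far \<alpha> e)" unfolding far_def by (rule theI')
  then show "far \<alpha> e \<in> e" "\<not> R e \<alpha> (far \<alpha> e)" by auto
  show "\<And>c. c \<in> e \<Longrightarrow> c \<noteq> far \<alpha> e \<Longrightarrow> R e \<alpha> c" using ex fp by blast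
  show "far \<alpha> e \<noteq> \<alpha>" using fp R_refl by metis
  show "far \<alpha> e \<in> V" using fp ab by auto
qed

lemma avoid_vertex:
  assumes "(a,d) \<in> (adj (E - {e1}))\<^sup>*" "\<not> R e1 a g"
  shows "(a,d) \<in> (adj (E - {e1} - {f. g \<in> f}))\<^sup>*"
  using assms(1)
proof (induction rule: rtrancl_induct)
  case base then show ?case by simp
next
  case (step c d)
  have "c \<noteq> g" using step(1) assms(2) unfolding R_def by blast
  moreover have "d \<noteq> g" using step(1,2) assms(2) unfolding R_def
    by (meson rtrancl.rtrancl_into_rtrancl)
  ultimately have "(c,d) \<in> adj (E - {e1} - {f. g \<in> f})" using step(2) by simp
  then show ?case using step.IH by (meson rtrancl.rtrancl_into_rtrancl)
qed

lemma rpath_avoid: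
  "rtrancl_path (\<lambda>x y. (x,y) \<in> adj F) x l y \<Longrightarrow> g \<notin> set (x#l) \<Longrightarrow> (x,y) \<in> (adj (F - {f. g \<in> f}))\<^sup>*"
proof (induction rule: rtrancl_path.induct)
  case (base x) then show ?case by simp
next
  case (step x y ys z)
  then have "(x,y) \<in> adj (F - {f. g \<in> f})" by simp
  moreover have "(y,z) \<in> (adj (F - {f. g \<in> f}))\<^sup>*" using step by simp
  ultimately show ?case by (meson converse_rtrancl_into_rtrancl)
qed

lemma pe_ex:
  assumes "\<alpha> \<in> V" "g \<in> V" "g \<noteq> \<alpha>"
  shows "\<exists>e. e \<in> E \<and> g \<in> e \<and> \<not> R e \<alpha> g"
proof -
  have "(\<alpha>,g) \<in> (adj E)\<^sup>*" using conn_rtr[OF connV assms(1,2)] .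
  from rtr_rpath[OF this] obtain ys where p: "rtrancl_path (\<lambda>x y. (x,y) \<in> adj E) \<alpha> ys g" "distinct (\<alpha>#ys)"
    by blast
  have "ys \<noteq> []" using p(1) assms(3) by (cases ys) (auto elim: rtrancl_path.cases)
  then obtain zs where zs: "ys = zs @ [g]" using rpath_props[OF p(1)]
    by (metis append_butlast_last_id last_ConsR)
  show ?thesis
  proof (cases "zs = []")
    case True
    then have eg: "{\<alpha>, g} \<in> E" using rpath_props[OF p(1)] zs by fastforce
    have "\<not> R {\<alpha>,g} \<alpha> g" using bridge[OF T eg] unfolding R_def by simp
    then show ?thesis using eg by blast
  next
    case False
    then obtain us d where us: "zs = us @ [d]" by (metis append_butlast_last_id)
    have p2: "rtrancl_path (\<lambda>x y. (x,y) \<in> adj E) \<alpha> (us @ d # [g]) g" using p(1) zs us by simp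
    from rtrancl_path_appendE[OF p2] obtain
      p3: "rtrancl_path (\<lambda>x y. (x,y) \<in> adj E) \<alpha> (us @ [d]) d" and p4: "rtrancl_path (\<lambda>x y. (x,y) \<in> adj E) d [g] g"
      by blast
    have ed: "{d,g} \<in> E" using p4 by (auto elim: rtrancl_path.cases)
    have "g \<notin> set (\<alpha> # us @ [d])" using p(2) zs us by auto
    from rpath_avoid[OF p3 this] have "(\<alpha>,d) \<in> (adj (E - {f. g \<in> f}))\<^sup>*" .
    then have "R {d,g} \<alpha> d" unfolding R_def by (rule rtr_mono[rotated]) auto
    then have "\<not> R {d,g} \<alpha> g" using one_side[OF ed refl assms(1)] by blast
    then show ?thesis using ed by blast
  qed
qed

lemma pe_uniq:
  assumes "\<alpha> \<in> V" "e1 \<in> E" "g \<in> e1" "\<not> R e1 \<alpha> g" "e2 \<in> E" "g \<in> e2" "\<not> R e2 \<alpha> g"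
  shows "e1 = e2"
proof (rule ccontr)
  assume ne: "e1 \<noteq> e2"
  obtain a b where ab: "e1 = {a,b}" "a \<noteq> b" "a \<in> V" "b \<in> V" using edgeE[OF assms(2)] by blast
  obtain d where d: "e1 = {g,d}" "d \<noteq> g" using ab assms(3) by auto
  have Rd: "R e1 \<alpha> d" using one_side[OF assms(2) d(1) assms(1)] assms(4) by blast
  from avoid_vertex[OF Rd[unfolded R_def] assms(4)] have
    "(\<alpha>,d) \<in> (adj (E - {e1} - {f. g \<in> f}))\<^sup>*" .
  then have "(\<alpha>,d) \<in> (adj (E - {e2}))\<^sup>*" by (rule rtr_mono[rotated]) (use assms(6) in auto)
  moreover have "{d,g} = e1" using d by auto
  then have "(d,g) \<in> adj (E - {e2})" using ne assms(2) by simp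
  ultimately have "R e2 \<alpha> g" unfolding R_def by (meson rtrancl.rtrancl_into_rtrancl)
  then show False using assms(7) by simp
qed

definition pe :: "'v \<Rightarrow> 'v \<Rightarrow> 'v set" where
  "pe \<alpha> g = (THE e. e \<in> E \<and> g \<in> e \<and> \<not> R e \<alpha> g)"

lemma pe_props:
  assumes "\<alpha> \<in> V" "g \<in> V" "g \<noteq> \<alpha>"
  shows "pe \<alpha> g \<in> E" "g \<in> pe \<alpha> g" "\<not> R (pe \<alpha> g) \<alpha> g" "far \<alpha> (pe \<alpha> g) = g"
proof -
  have "\<exists>!e. e \<in> E \<and> g \<in> e \<and> \<not> R e \<alpha> g"
  proof (rule ex_ex1I)
    show "\<exists>e. e \<in> E \<and> g \<in> e \<and> \<not> R e \<alpha> g" using pe_ex[OF assms] .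
    fix e1 e2 assume a1: "e1 \<in> E \<and> g \<in> e1 \<and> \<not> R e1 \<alpha> g" and a2: "e2 \<in> E \<and> g \<in> e2 \<and> \<not> R e2 \<alpha> g"
    show "e1 = e2" using pe_uniq[OF assms(1), of e1 g e2] a1 a2 by blast
  qed
  then have h: "pe \<alpha> g \<in> E \<and> g \<in> pe \<alpha> g \<and> \<not> R (pe \<alpha> g) \<alpha> g" unfolding pe_def by (rule theI')
  then show "pe \<alpha> g \<in> E" "g \<in> pe \<alpha> g" "\<not> R (pe \<alpha> g) \<alpha> g" by auto
  show "far \<alpha> (pe \<alpha> g) = g"
  proof (rule ccontr)
    assume "far \<alpha> (pe \<alpha> g) \<noteq> g"
    then have "R (pe \<alpha> g) \<alpha> g" using far_props(3)[OF _ assms(1), of "pe \<alpha> g" g] h by simp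
    then show False using h by simp
  qed
qed

lemma pe_unique: "\<alpha> \<in> V \<Longrightarrow> e \<in> E \<Longrightarrow> g \<in> e \<Longrightarrow> \<not> R e \<alpha> g \<Longrightarrow> pe \<alpha> g = e"
proof -
  assume a: "\<alpha> \<in> V" "e \<in> E" "g \<in> e" "\<not> R e \<alpha> g"
  then have g: "g \<in> V" "g \<noteq> \<alpha>" using edge_inV[OF eok] R_refl by blast+
  show ?thesis using pe_uniq[OF a(1) pe_props(1,2,3)[OF a(1) g] a(2-4)] .
qed

lemma pe_far: "e \<in> E \<Longrightarrow> \<alpha> \<in> V \<Longrightarrow> pe \<alpha> (far \<alpha> e) = e"
  using pe_unique far_props by blast

lemma far_adj: "{\<alpha>,\<beta>} \<in> E \<Longrightarrow> far \<alpha> {\<alpha>,\<beta>} = \<beta>"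
proof -
  assume e: "{\<alpha>,\<beta>} \<in> E"
  have ab: "\<alpha> \<noteq> \<beta>" "\<alpha> \<in> V" "\<beta> \<in> V" using edge_ok[OF eok e] by auto
  have "far \<alpha> {\<alpha>,\<beta>} \<in> {\<alpha>,\<beta>}" "far \<alpha> {\<alpha>,\<beta>} \<noteq> \<alpha>" using far_props[OF e ab(2)] by auto
  then show ?thesis by auto
qed

lemma pe_adj: "{\<alpha>,\<beta>} \<in> E \<Longrightarrow> pe \<alpha> \<beta> = {\<alpha>,\<beta>}"
  using pe_far far_adj edge_ok[OF eok] by metis

lemma R_shift:
  assumes "{\<alpha>,\<beta>} \<in> E" "e \<noteq> {\<alpha>,\<beta>}"
  shows "R e \<alpha> c \<longleftrightarrow> R e \<beta> c"
proof -
  have "(\<alpha>,\<beta>) \<in> adj (E - {e})" "(\<beta>,\<alpha>) \<in> adj (E - {e})" using assms by (auto simp: insert_commute)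
  then show ?thesis unfolding R_def by (meson converse_rtrancl_into_rtrancl)
qed

lemma far_shift:
  assumes "{\<alpha>,\<beta>} \<in> E" "e \<in> E" "e \<noteq> {\<alpha>,\<beta>}"
  shows "far \<alpha> e = far \<beta> e"
proof -
  have ab: "\<alpha> \<in> V" "\<beta> \<in> V" using edge_ok[OF eok assms(1)] by auto
  note fa = far_props[OF assms(2) ab(1)] and fb = far_props[OF assms(2) ab(2)]
  note rs = R_shift[OF assms(1,3)]
  show ?thesis using fa fb rs by metis
qed

lemma pe_shift:
  assumes "{\<alpha>,\<beta>} \<in> E" "g \<in> V" "g \<noteq> \<alpha>" "g \<noteq> \<beta>"
  shows "pe \<alpha> g = pe \<beta> g"
proof -
  have ab: "\<alpha> \<in> V" "\<beta> \<in> V" using edge_ok[OF eok assms(1)] by auto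
  note pa = pe_props[OF ab(1) assms(2,3)]
  have "pe \<alpha> g \<noteq> {\<alpha>,\<beta>}" using pa(2) assms(3,4) by auto
  then have "\<not> R (pe \<alpha> g) \<beta> g" using R_shift[OF assms(1)] pa(3) by blast
  then show ?thesis using pe_unique[OF ab(2) pa(1,2)] by simp
qed

end



context tr begin

definition W :: "'v \<Rightarrow> ('v \<Rightarrow> real) \<Rightarrow> 'v set \<Rightarrow> real" where
  "W \<alpha> x = (\<lambda>e. if e \<in> E then x (far \<alpha> e) else undefined)"

definition chart :: "'v \<Rightarrow> ('v set \<Rightarrow> real) \<Rightarrow> 'v \<Rightarrow> real" where
  "chart \<alpha> w = (\<lambda>g. if g \<in> V - {\<alpha>} then w (pe \<alpha> g) else undefined)"

definition Epos :: "('v set \<Rightarrow> real) \<Rightarrow> 'v set set" where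
  "Epos w = {e \<in> E. 0 \<le> w e}"

definition comp :: "'v \<Rightarrow> ('v set \<Rightarrow> real) \<Rightarrow> 'v set" where
  "comp \<alpha> w = {\<beta>. (\<alpha>,\<beta>) \<in> (adj (Epos w))\<^sup>*}"

definition cls :: "'v \<Rightarrow> ('v set \<Rightarrow> real) \<Rightarrow> ('v \<times> ('v \<Rightarrow> real)) set" where
  "cls \<alpha> w = {(\<beta>, chart \<beta> w) | \<beta>. \<beta> \<in> comp \<alpha> w}"

lemma topX: "topspace (arb_disj V) = {(\<alpha>,x). \<alpha> \<in> V \<and> x \<in> extensional (V - {\<alpha>})}"
  by (auto simp: arb_disj_def PiE_def)

lemma W_ext: "W \<alpha> x \<in> extensional E" by (auto simp: W_def extensional_def)
lemma chart_ext: "chart \<alpha> w \<in> extensional (V - {\<alpha>})" by (auto simp: chart_def extensional_def)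

lemma Epos_sub: "Epos w \<subseteq> E" by (auto simp: Epos_def)

lemma comp_V: "\<alpha> \<in> V \<Longrightarrow> \<beta> \<in> comp \<alpha> w \<Longrightarrow> \<beta> \<in> V"
  unfolding comp_def using rtr_inV[OF eok Epos_sub] by blast

lemma comp_self: "\<alpha> \<in> comp \<alpha> w" by (simp add: comp_def)

lemma W_chart: "\<alpha> \<in> V \<Longrightarrow> w \<in> extensional E \<Longrightarrow> W \<alpha> (chart \<alpha> w) = w"
proof
  fix e assume a: "\<alpha> \<in> V" "w \<in> extensional E"
  show "W \<alpha> (chart \<alpha> w) e = w e"
  proof (cases "e \<in> E")
    case True
    note f = far_props[OF True a(1)]
    have "chart \<alpha> w (far \<alpha> e) = w (pe \<alpha> (far \<alpha> e))" using f by (simp add: chart_def)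
    also have "\<dots> = w e" using pe_far[OF True a(1)] by simp
    finally show ?thesis using True by (simp add: W_def)
  next
    case False then show ?thesis using a(2) by (simp add: W_def extensional_def)
  qed
qed

lemma chart_W: "\<alpha> \<in> V \<Longrightarrow> x \<in> extensional (V - {\<alpha>}) \<Longrightarrow> chart \<alpha> (W \<alpha> x) = x"
proof
  fix g assume a: "\<alpha> \<in> V" "x \<in> extensional (V - {\<alpha>})"
  show "chart \<alpha> (W \<alpha> x) g = x g"
  proof (cases "g \<in> V - {\<alpha>}")
    case True
    note p = pe_props[OF a(1), of g]
    show ?thesis using True p by (simp add: chart_def W_def)
  next
    case False
    have "x g = undefined" using a(2) False by (simp add: extensional_def)
    have "chart \<alpha> (W \<alpha> x) g = undefined" unfolding chart_def by (rule if_not_P[OF False])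
    then show ?thesis using \<open>x g = undefined\<close> by simp
  qed
qed

lemma chart_adj: "{\<beta>,\<delta>} \<in> E \<Longrightarrow> chart \<beta> w \<delta> = w {\<beta>,\<delta>}"
proof -
  assume e: "{\<beta>,\<delta>} \<in> E"
  have "\<beta> \<noteq> \<delta>" "\<delta> \<in> V" using edge_ok[OF eok e] by auto
  then show ?thesis using pe_adj[OF e] by (simp add: chart_def)
qed

lemma gen_W:
  assumes "((\<alpha>,x),(\<beta>,y)) \<in> arb_gen V E"
  shows "W \<alpha> x = W \<beta> y" "(\<alpha>,\<beta>) \<in> (adj (Epos (W \<alpha> x)))\<^sup>*"
proof -
  have g: "{\<alpha>,\<beta>} \<in> E" "x \<beta> = y \<alpha>" "0 \<le> x \<beta>" "\<forall>\<gamma>\<in>V - {\<alpha>, \<beta>}. x \<gamma> = y \<gamma>"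
    using assms by (auto simp: arb_gen_def)
  have ab: "\<alpha> \<noteq> \<beta>" "\<alpha> \<in> V" "\<beta> \<in> V" using edge_ok[OF eok g(1)] by auto
  show "W \<alpha> x = W \<beta> y"
  proof
    fix e show "W \<alpha> x e = W \<beta> y e"
    proof (cases "e \<in> E")
      case False then show ?thesis by (simp add: W_def)
    next
      case True
      show ?thesis
      proof (cases "e = {\<alpha>,\<beta>}")
        case True
        have "far \<beta> {\<alpha>,\<beta>} = \<alpha>" using far_adj[of \<beta> \<alpha>] g(1) by (simp add: insert_commute)
        then show ?thesis using True g(1,2) far_adj[OF g(1)] by (simp add: W_def)
      next
        case False
        have fe: "far \<alpha> e = far \<beta> e" using far_shift[OF g(1) \<open>e \<in> E\<close> False] .
        have "far \<alpha> e \<noteq> \<alpha>" "far \<beta> e \<noteq> \<beta>" "far \<alpha> e \<in> V"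
          using far_props[OF \<open>e \<in> E\<close> ab(2)] far_props[OF \<open>e \<in> E\<close> ab(3)] by auto
        then have "x (far \<alpha> e) = y (far \<beta> e)" using g(4) fe by auto
        then show ?thesis using \<open>e \<in> E\<close> by (simp add: W_def)
      qed
    qed
  qed
  have "W \<alpha> x {\<alpha>,\<beta>} = x \<beta>" using far_adj[OF g(1)] g(1) by (simp add: W_def)
  then have "{\<alpha>,\<beta>} \<in> Epos (W \<alpha> x)" using g(1,3) by (simp add: Epos_def)
  then show "(\<alpha>,\<beta>) \<in> (adj (Epos (W \<alpha> x)))\<^sup>*" by auto
qed

definition Rel :: "(('v \<times> ('v \<Rightarrow> real)) \<times> ('v \<times> ('v \<Rightarrow> real))) set" where
  "Rel = {((\<alpha>,x),(\<beta>,y)). (\<alpha>,x) \<in> topspace (arb_disj V) \<and> (\<beta>,y) \<in> topspace (arb_disj V)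
     \<and> W \<alpha> x = W \<beta> y \<and> (\<alpha>,\<beta>) \<in> (adj (Epos (W \<alpha> x)))\<^sup>*}"

lemma Rel_trans: "trans Rel"
proof (rule transI)
  fix a b c assume ab: "(a,b) \<in> Rel" and bc: "(b,c) \<in> Rel"
  obtain \<alpha> x \<beta> y \<gamma> z where abc: "a = (\<alpha>,x)" "b = (\<beta>,y)" "c = (\<gamma>,z)" by (cases a, cases b, cases c) auto
  show "(a,c) \<in> Rel" using ab bc unfolding abc Rel_def by (auto intro: rtrancl_trans)
qed

lemma Rel_sym: "(a,b) \<in> Rel \<Longrightarrow> (b,a) \<in> Rel"
proof -
  assume ab: "(a,b) \<in> Rel"
  obtain \<alpha> x \<beta> y where abc: "a = (\<alpha>,x)" "b = (\<beta>,y)" by (cases a, cases b) auto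
  show "(b,a) \<in> Rel" using ab unfolding abc Rel_def by (auto intro: rtr_sym)
qed

lemma gen_Rel: "arb_gen V E \<subseteq> Rel"
proof
  fix p assume p: "p \<in> arb_gen V E"
  obtain \<alpha> x \<beta> y where pp: "p = ((\<alpha>,x),(\<beta>,y))" by (cases p) auto
  have t: "(\<alpha>,x) \<in> topspace (arb_disj V)" "(\<beta>,y) \<in> topspace (arb_disj V)" using p pp by (auto simp: arb_gen_def)
  show "p \<in> Rel" using gen_W[OF p[unfolded pp]] t pp by (simp add: Rel_def)
qed

lemma rel_sub: "arb_rel V E \<subseteq> Rel"
proof -
  have "Id_on (topspace (arb_disj V)) \<subseteq> Rel" by (auto simp: Rel_def)
  moreover have "arb_gen V E \<union> (arb_gen V E)\<inverse> \<subseteq> Rel" using gen_Rel Rel_sym by blast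
  then have "(arb_gen V E \<union> (arb_gen V E)\<inverse>)\<^sup>+ \<subseteq> Rel\<^sup>+" using trancl_mono by blast
  then have "(arb_gen V E \<union> (arb_gen V E)\<inverse>)\<^sup>+ \<subseteq> Rel" using trancl_id[OF Rel_trans] by simp
  ultimately show ?thesis unfolding arb_rel_def by blast
qed

lemma chart_gen:
  assumes "{c,d} \<in> Epos w"
  shows "((c, chart c w), (d, chart d w)) \<in> arb_gen V E"
proof -
  have e: "{c,d} \<in> E" "0 \<le> w {c,d}" using assms by (auto simp: Epos_def)
  have cd: "c \<noteq> d" "c \<in> V" "d \<in> V" using edge_ok[OF eok e(1)] by auto
  have e': "{d,c} \<in> E" using e(1) by (simp add: insert_commute)
  have 1: "chart c w d = w {c,d}" using chart_adj[OF e(1)] .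
  have 2: "chart d w c = w {c,d}" using chart_adj[OF e'] by (simp add: insert_commute)
  have 3: "\<forall>\<gamma>\<in>V - {c, d}. chart c w \<gamma> = chart d w \<gamma>"
    using pe_shift[OF e(1)] by (auto simp: chart_def)
  show ?thesis unfolding arb_gen_def using cd e 1 2 3 chart_ext topX by auto
qed

lemma arb_rel_step: "(a,b) \<in> arb_rel V E \<Longrightarrow> (b,c) \<in> arb_gen V E \<Longrightarrow> (a,c) \<in> arb_rel V E"
  unfolding arb_rel_def by (auto intro: trancl_into_trancl)

lemma Rel_sub: "Rel \<subseteq> arb_rel V E"
proof
  fix p assume p: "p \<in> Rel"
  obtain \<alpha> x \<beta> y where pp: "p = ((\<alpha>,x),(\<beta>,y))" by (cases p) auto
  have h: "\<alpha> \<in> V" "x \<in> extensional (V - {\<alpha>})" "\<beta> \<in> V" "y \<in> extensional (V - {\<beta>})"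
     "W \<alpha> x = W \<beta> y" "(\<alpha>,\<beta>) \<in> (adj (Epos (W \<alpha> x)))\<^sup>*"
    using p pp by (auto simp: Rel_def topX)
  define w where "w = W \<alpha> x"
  have xw: "chart \<alpha> w = x" using chart_W h(1,2) w_def by simp
  have yw: "chart \<beta> w = y" using chart_W h(3,4) h(5) w_def by simp
  have "((\<alpha>,x),(\<beta>, chart \<beta> w)) \<in> arb_rel V E" using h(6)[folded w_def]
  proof (induction rule: rtrancl_induct)
    case base
    have "((\<alpha>,x),(\<alpha>,x)) \<in> Id_on (topspace (arb_disj V))" by (rule Id_onI) (simp add: topX h(1,2))
    then show ?case using xw by (simp add: arb_rel_def)
  next
    case (step c d)
    from chart_gen[OF step(2)[simplified]] show ?case using arb_rel_step[OF step.IH] by blast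
  qed
  then show "p \<in> arb_rel V E" using pp yw by simp
qed

lemma rel_eq: "arb_rel V E = Rel" using rel_sub Rel_sub by blast

lemma equiv_rel: "equiv (topspace (arb_disj V)) (arb_rel V E)"
proof (rule equivI)
  show "refl_on (topspace (arb_disj V)) (arb_rel V E)"
    unfolding rel_eq
  proof (rule refl_onI)
    fix a assume "a \<in> topspace (arb_disj V)"
    moreover obtain \<alpha> x where "a = (\<alpha>,x)" by (cases a)
    ultimately show "(a,a) \<in> Rel" unfolding Rel_def by simp
  qed
  show "arb_rel V E \<subseteq> topspace (arb_disj V) \<times> topspace (arb_disj V)"
    unfolding rel_eq
  proof
    fix p assume "p \<in> Rel"
    moreover obtain a b where "p = (a,b)" by (cases p)
    moreover obtain \<alpha> x \<beta> y where "a = (\<alpha>,x)" "b = (\<beta>,y)" by (cases a, cases b)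
    ultimately show "p \<in> topspace (arb_disj V) \<times> topspace (arb_disj V)" unfolding Rel_def by simp
  qed
  show "sym (arb_rel V E)" unfolding rel_eq using Rel_sym by (auto intro: symI)
  show "trans (arb_rel V E)" unfolding rel_eq by (rule Rel_trans)
qed

lemma cls_class:
  assumes "\<alpha> \<in> V" "w \<in> extensional E"
  shows "arb_rel V E `` {(\<alpha>, chart \<alpha> w)} = cls \<alpha> w"
proof -
  have W: "W \<alpha> (chart \<alpha> w) = w" using W_chart assms by simp
  show ?thesis
  proof (intro equalityI subsetI)
    fix q assume "q \<in> arb_rel V E `` {(\<alpha>, chart \<alpha> w)}"
    then have q0: "((\<alpha>, chart \<alpha> w), q) \<in> Rel" unfolding rel_eq by simp
    obtain \<beta> y where q1: "q = (\<beta>,y)" by (cases q)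
    have q: "q = (\<beta>,y)" "((\<alpha>, chart \<alpha> w), (\<beta>,y)) \<in> Rel" using q0 q1 by auto
    have h: "\<beta> \<in> V" "y \<in> extensional (V - {\<beta>})" "W \<beta> y = w" "(\<alpha>,\<beta>) \<in> (adj (Epos w))\<^sup>*"
      using q(2) W by (auto simp: Rel_def topX)
    have "y = chart \<beta> w" using chart_W[OF h(1,2)] h(3) by simp
    then show "q \<in> cls \<alpha> w" using q h by (auto simp: cls_def comp_def)
  next
    fix q assume "q \<in> cls \<alpha> w"
    then obtain \<beta> where q: "q = (\<beta>, chart \<beta> w)" "(\<alpha>,\<beta>) \<in> (adj (Epos w))\<^sup>*"
      by (auto simp: cls_def comp_def)
    have "\<beta> \<in> V" using comp_V[OF assms(1)] q(2) by (simp add: comp_def)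
    then have "((\<alpha>, chart \<alpha> w), q) \<in> Rel" using q assms W W_chart chart_ext
      by (simp add: Rel_def topX)
    then show "q \<in> arb_rel V E `` {(\<alpha>, chart \<alpha> w)}" unfolding rel_eq by simp
  qed
qed

lemma class_cls:
  assumes "z \<in> topspace (arb_disj V)"
  obtains \<alpha> w where "\<alpha> \<in> V" "w \<in> extensional E" "z = (\<alpha>, chart \<alpha> w)"
    "arb_rel V E `` {z} = cls \<alpha> w"
proof -
  obtain \<alpha> x where z: "z = (\<alpha>,x)" "\<alpha> \<in> V" "x \<in> extensional (V - {\<alpha>})" using assms by (auto simp: topX)
  have xx: "x = chart \<alpha> (W \<alpha> x)" using chart_W z by simp
  have cc: "arb_rel V E `` {z} = cls \<alpha> (W \<alpha> x)" using cls_class[OF z(2) W_ext, of \<alpha> x] xx z(1) by simp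
  show ?thesis by (rule that[of \<alpha> "W \<alpha> x"]) (use z W_ext xx cc in auto)
qed

lemma cls_eq:
  assumes "\<alpha> \<in> V" "w \<in> extensional E" "\<beta> \<in> V" "w' \<in> extensional E"
  shows "cls \<alpha> w = cls \<beta> w' \<longleftrightarrow> w = w' \<and> \<beta> \<in> comp \<alpha> w"
proof -
  have t: "(\<alpha>, chart \<alpha> w) \<in> topspace (arb_disj V)" "(\<beta>, chart \<beta> w') \<in> topspace (arb_disj V)"
    using assms chart_ext by (auto simp: topX)
  have "cls \<alpha> w = cls \<beta> w' \<longleftrightarrow> ((\<alpha>, chart \<alpha> w), (\<beta>, chart \<beta> w')) \<in> Rel"
    using eq_equiv_class_iff[OF equiv_rel t] cls_class assms rel_eq by simp
  also have "\<dots> \<longleftrightarrow> w = w' \<and> \<beta> \<in> comp \<alpha> w"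
    using t W_chart assms by (auto simp: Rel_def comp_def)
  finally show ?thesis .
qed

end



context tr begin

definition In :: "'v set set \<Rightarrow> 'v set set" where
  "In P = {e \<in> E. \<exists>B\<in>P. e \<subseteq> B}"
definition Zr :: "'v set \<Rightarrow> 'v set set \<Rightarrow> 'v set set" where
  "Zr S P = {e \<in> E. e \<subseteq> S} - In P"
definition Ng :: "'v set \<Rightarrow> 'v set set" where
  "Ng S = {e \<in> E. e \<inter> S \<noteq> {} \<and> \<not> e \<subseteq> S}"

definition A :: "'v set \<Rightarrow> 'v set set \<Rightarrow> ('v set \<Rightarrow> real) set" where
  "A S P = {w \<in> extensional E. (\<forall>e\<in>In P. 0 < w e) \<and> (\<forall>e\<in>Zr S P. w e = 0) \<and> (\<forall>e\<in>Ng S. w e < 0)}"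
definition cA :: "'v set \<Rightarrow> 'v set set \<Rightarrow> ('v set \<Rightarrow> real) set" where
  "cA S P = {w \<in> extensional E. (\<forall>e\<in>In P. 0 \<le> w e) \<and> (\<forall>e\<in>Zr S P. w e = 0) \<and> (\<forall>e\<in>Ng S. w e \<le> 0)}"

definition ctr :: "'v \<Rightarrow> ('v set \<Rightarrow> real) \<Rightarrow> ('v \<times> 'v) set" where
  "ctr \<alpha> w = {(c,d). c \<in> comp \<alpha> w \<and> d \<in> comp \<alpha> w \<and> {c,d} \<in> E \<and> 0 < w {c,d}}"

lemma edge2: "e \<in> E \<Longrightarrow> a \<in> e \<Longrightarrow> b \<in> e \<Longrightarrow> a \<noteq> b \<Longrightarrow> e = {a,b}"
  by (erule edgeE) auto

lemma subtree_conn: "is_subtree V E U \<Longrightarrow> x \<in> U \<Longrightarrow> y \<in> U \<Longrightarrow> (x,y) \<in> (adj (induced_edges E U))\<^sup>*"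
proof -
  assume "is_subtree V E U" "x \<in> U" "y \<in> U"
  then have "graph_connected U (induced_edges E U)" by (simp add: is_subtree_def is_tree_def)
  from conn_rtr[OF this \<open>x \<in> U\<close> \<open>y \<in> U\<close>] show ?thesis .
qed

lemma induced_sub: "induced_edges E U \<subseteq> E" by (auto simp: induced_edges_def)

lemma part_uniq: "partition_on S P \<Longrightarrow> B1 \<in> P \<Longrightarrow> B2 \<in> P \<Longrightarrow> x \<in> B1 \<Longrightarrow> x \<in> B2 \<Longrightarrow> B1 = B2"
  unfolding partition_on_def pairwise_def disjnt_def by blast

lemma part_ex: "partition_on S P \<Longrightarrow> x \<in> S \<Longrightarrow> \<exists>B\<in>P. x \<in> B"
  unfolding partition_on_def by blast

lemma part_sub: "partition_on S P \<Longrightarrow> B \<in> P \<Longrightarrow> B \<subseteq> S"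
  unfolding partition_on_def by blast

lemma part_ne: "partition_on S P \<Longrightarrow> B \<in> P \<Longrightarrow> B \<noteq> {}"
  unfolding partition_on_def by blast

lemma S_pt_cls: "\<alpha> \<in> V \<Longrightarrow> S_pt V (cls \<alpha> w) = comp \<alpha> w"
  unfolding S_pt_def cls_def using comp_V by blast

lemma contr_cls: "\<alpha> \<in> V \<Longrightarrow> contr_rel V E (cls \<alpha> w) = ctr \<alpha> w"
proof -
  assume a: "\<alpha> \<in> V"
  have "(c,d) \<in> contr_rel V E (cls \<alpha> w) \<longleftrightarrow> (c,d) \<in> ctr \<alpha> w" for c d
  proof -
    have "(\<exists>u v. (c, u) \<in> cls \<alpha> w \<and> (d, v) \<in> cls \<alpha> w \<and> u d = v c \<and> 0 < u d) \<longleftrightarrow>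
          c \<in> comp \<alpha> w \<and> d \<in> comp \<alpha> w \<and> chart c w d = chart d w c \<and> 0 < chart c w d"
      by (auto simp: cls_def)
    moreover have "{c,d} \<in> E \<Longrightarrow> chart c w d = w {c,d} \<and> chart d w c = w {c,d}"
      using chart_adj[of c d w] chart_adj[of d c w] by (simp add: insert_commute)
    ultimately show ?thesis unfolding contr_rel_def ctr_def S_pt_cls[OF a] by auto
  qed
  then show ?thesis by auto
qed

lemma corr_pt_cls: "\<alpha> \<in> V \<Longrightarrow> corr_pt V E (cls \<alpha> w) = (comp \<alpha> w, comp \<alpha> w // (ctr \<alpha> w)\<^sup>*)"
  by (simp add: corr_pt_def S_pt_cls contr_cls)

lemma In_sub: "partition_on S P \<Longrightarrow> e \<in> In P \<Longrightarrow> e \<subseteq> S"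
  unfolding In_def using part_sub by blast

context
  fixes S P assumes C: "is_corr V E (S,P)"
begin

lemma CS: "is_subtree V E S" and CP: "partition_on S P" and CB: "\<And>B. B \<in> P \<Longrightarrow> is_subtree V E B"
  using C by (auto simp: is_corr_def)

lemma SV: "S \<subseteq> V" using CS by (simp add: is_subtree_def)

lemma S_ne: "S \<noteq> {}" using CS by (simp add: is_subtree_def is_tree_def)

lemma ind_In: "B \<in> P \<Longrightarrow> induced_edges E B \<subseteq> In P"
  unfolding induced_edges_def In_def by blast

lemma ind_S_pos: "w \<in> cA S P \<Longrightarrow> induced_edges E S \<subseteq> Epos w"
proof
  fix e assume w: "w \<in> cA S P" and e: "e \<in> induced_edges E S"
  have "e \<in> In P \<or> e \<in> Zr S P" using e by (auto simp: induced_edges_def Zr_def)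
  then have "0 \<le> w e" using w by (auto simp: cA_def)
  then show "e \<in> Epos w" using e by (simp add: Epos_def induced_edges_def)
qed

lemma A_cA: "A S P \<subseteq> cA S P"
  unfolding A_def cA_def by (auto simp: less_imp_le)

lemma S_sub_comp: "\<alpha> \<in> S \<Longrightarrow> w \<in> cA S P \<Longrightarrow> S \<subseteq> comp \<alpha> w"
proof
  fix x assume a: "\<alpha> \<in> S" "w \<in> cA S P" and x: "x \<in> S"
  have "(\<alpha>,x) \<in> (adj (induced_edges E S))\<^sup>*" using subtree_conn[OF CS a(1) x] .
  then show "x \<in> comp \<alpha> w" unfolding comp_def using rtr_mono[OF ind_S_pos[OF a(2)]] by blast
qed

lemma comp_sub_S: "\<alpha> \<in> S \<Longrightarrow> w \<in> A S P \<Longrightarrow> comp \<alpha> w \<subseteq> S"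
proof
  fix x assume a: "\<alpha> \<in> S" "w \<in> A S P" and "x \<in> comp \<alpha> w"
  then have "(\<alpha>,x) \<in> (adj (Epos w))\<^sup>*" by (simp add: comp_def)
  then show "x \<in> S"
  proof (induction rule: rtrancl_induct)
    case base then show ?case using a by simp
  next
    case (step c d)
    have e: "{c,d} \<in> E" "0 \<le> w {c,d}" using step(2) by (auto simp: Epos_def)
    show ?case
    proof (rule ccontr)
      assume "d \<notin> S"
      then have "{c,d} \<in> Ng S" using e step(3) by (auto simp: Ng_def)
      then show False using a(2) e(2) by (auto simp: A_def)
    qed
  qed
qed

lemma comp_eq: "\<alpha> \<in> S \<Longrightarrow> w \<in> A S P \<Longrightarrow> comp \<alpha> w = S"
  using comp_sub_S S_sub_comp A_cA by blast

lemma blocks: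
  assumes a: "\<alpha> \<in> S" "w \<in> A S P"
  shows "S // (ctr \<alpha> w)\<^sup>* = P"
proof -
  have cq: "comp \<alpha> w = S" using comp_eq a by simp
  have ctr_eq: "ctr \<alpha> w = adj (In P)"
  proof (intro equalityI subsetI)
    fix q assume q: "q \<in> ctr \<alpha> w"
    obtain c d where cd: "q = (c,d)" by (cases q)
    have h: "c \<in> S" "d \<in> S" "{c,d} \<in> E" "0 < w {c,d}" using q cd cq by (auto simp: ctr_def)
    have "{c,d} \<notin> Zr S P" using h(4) a(2) by (auto simp: A_def)
    then have "{c,d} \<in> In P" using h by (auto simp: Zr_def)
    then show "q \<in> adj (In P)" using cd by simp
  next
    fix q assume q: "q \<in> adj (In P)"
    obtain c d where cd: "q = (c,d)" by (cases q)
    have h: "{c,d} \<in> In P" using q cd by simp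
    then have "{c,d} \<subseteq> S" "{c,d} \<in> E" "0 < w {c,d}" using In_sub[OF CP] a(2) by (auto simp: In_def A_def)
    then show "q \<in> ctr \<alpha> w" using cd cq by (simp add: ctr_def)
  qed
  have cls_blk: "(adj (In P))\<^sup>* `` {x} = B" if B: "B \<in> P" "x \<in> B" for x B
  proof (intro equalityI subsetI)
    fix y assume "y \<in> (adj (In P))\<^sup>* `` {x}"
    then have "(x,y) \<in> (adj (In P))\<^sup>*" by simp
    then show "y \<in> B"
    proof (induction rule: rtrancl_induct)
      case base then show ?case using B by simp
    next
      case (step c d)
      then obtain B' where B': "B' \<in> P" "{c,d} \<subseteq> B'" by (auto simp: In_def)
      have "B' = B" using part_uniq[OF CP B'(1) B(1), of c] B' step(3) by simp
      then show ?case using B' by simp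
    qed
  next
    fix y assume "y \<in> B"
    have "(x,y) \<in> (adj (induced_edges E B))\<^sup>*" using subtree_conn[OF CB[OF B(1)] B(2) \<open>y \<in> B\<close>] .
    then show "y \<in> (adj (In P))\<^sup>* `` {x}" using rtr_mono[OF ind_In[OF B(1)]] by blast
  qed
  show ?thesis
  proof (intro equalityI subsetI)
    fix X assume "X \<in> S // (ctr \<alpha> w)\<^sup>*"
    then obtain x where x: "x \<in> S" "X = (adj (In P))\<^sup>* `` {x}" unfolding ctr_eq by (auto elim: quotientE)
    obtain B where B: "B \<in> P" "x \<in> B" using part_ex[OF CP x(1)] by blast
    show "X \<in> P" using cls_blk[OF B] x B by simp
  next
    fix B assume B: "B \<in> P"
    then obtain x where x: "x \<in> B" using part_ne[OF CP] by blast
    have "x \<in> S" using part_sub[OF CP B] x by blast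
    then have "(adj (In P))\<^sup>* `` {x} \<in> S // (adj (In P))\<^sup>*" by (rule quotientI)
    then show "B \<in> S // (ctr \<alpha> w)\<^sup>*" using cls_blk[OF B x] ctr_eq by simp
  qed
qed

lemma ctr_sym: "(c,d) \<in> (ctr \<alpha> w)\<^sup>* \<Longrightarrow> (d,c) \<in> (ctr \<alpha> w)\<^sup>*"
proof -
  have "(ctr \<alpha> w)\<inverse> = ctr \<alpha> w" by (auto simp: ctr_def insert_commute)
  then show "(c,d) \<in> (ctr \<alpha> w)\<^sup>* \<Longrightarrow> (d,c) \<in> (ctr \<alpha> w)\<^sup>*" by (metis rtrancl_converseI)
qed

lemma strat_A:
  assumes a: "\<alpha> \<in> V" "w \<in> extensional E" and cp: "comp \<alpha> w = S" "S // (ctr \<alpha> w)\<^sup>* = P"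
  shows "w \<in> A S P"
proof -
  have ctr_adj: "\<And>e. 0 \<ge> w e \<Longrightarrow> ctr \<alpha> w \<subseteq> adj (E - {e})"
    by (auto simp: ctr_def)
  have comp_r: "\<And>x. x \<in> S \<Longrightarrow> (\<alpha>,x) \<in> (adj (Epos w))\<^sup>*" using cp(1) by (auto simp: comp_def)
  have I: "0 < w e" if e: "e \<in> In P" for e
  proof (rule ccontr)
    assume "\<not> 0 < w e"
    then have sub: "ctr \<alpha> w \<subseteq> adj (E - {e})" using ctr_adj by simp
    obtain B where B: "B \<in> P" "e \<subseteq> B" "e \<in> E" using e by (auto simp: In_def)
    obtain a b where ab: "e = {a,b}" "a \<noteq> b" using edgeE[OF B(3)] by metis
    obtain g where g: "g \<in> S" "B = (ctr \<alpha> w)\<^sup>* `` {g}" using B(1) cp(2)[symmetric] by (auto elim: quotientE)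
    have "(g,a) \<in> (ctr \<alpha> w)\<^sup>*" "(g,b) \<in> (ctr \<alpha> w)\<^sup>*" using g(2) B(2) ab by auto
    then have "(a,b) \<in> (ctr \<alpha> w)\<^sup>*" using ctr_sym by (meson rtrancl_trans)
    then have "(a,b) \<in> (adj (E - {e}))\<^sup>*" using rtrancl_mono[OF sub] by blast
    then show False using bridge[OF T] B(3) ab(1) by simp
  qed
  have Z: "w e = 0" if e: "e \<in> Zr S P" for e
  proof -
    have e1: "e \<in> E" "e \<subseteq> S" "e \<notin> In P" using e by (auto simp: Zr_def)
    obtain a b where ab: "e = {a,b}" "a \<noteq> b" using edgeE[OF e1(1)] by metis
    have abS: "a \<in> S" "b \<in> S" using e1 ab by auto
    have ge: "0 \<le> w e"
    proof (rule ccontr)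
      assume "\<not> 0 \<le> w e"
      then have sub: "Epos w \<subseteq> E - {e}" by (auto simp: Epos_def)
      have "(a,b) \<in> (adj (Epos w))\<^sup>*" using comp_r[OF abS(1)] comp_r[OF abS(2)] by (meson rtr_sym rtrancl_trans)
      then show False using bridge_gen[of a b "Epos w"] sub e1(1) ab(1) by simp
    qed
    have le: "\<not> 0 < w e"
    proof
      assume pos: "0 < w e"
      have "(a,b) \<in> ctr \<alpha> w" using abS cp(1) e1(1) ab pos by (simp add: ctr_def)
      then have "b \<in> (ctr \<alpha> w)\<^sup>* `` {a}" by auto
      moreover have "a \<in> (ctr \<alpha> w)\<^sup>* `` {a}" by auto
      moreover have "(ctr \<alpha> w)\<^sup>* `` {a} \<in> P" using quotientI[OF abS(1), of "(ctr \<alpha> w)\<^sup>*"] cp(2) by simp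
      ultimately have "e \<in> In P" using e1 ab by (auto simp: In_def)
      then show False using e1 by simp
    qed
    show ?thesis using ge le by simp
  qed
  have N: "w e < 0" if e: "e \<in> Ng S" for e
  proof (rule ccontr)
    assume "\<not> w e < 0"
    have e1: "e \<in> E" "e \<inter> S \<noteq> {}" "\<not> e \<subseteq> S" using e by (auto simp: Ng_def)
    then obtain a b where ab: "a \<in> e" "a \<in> S" "b \<in> e" "b \<notin> S" by blast
    then have eab: "e = {a,b}" using edge2[OF e1(1) ab(1,3)] by auto
    have "e \<in> Epos w" using \<open>\<not> w e < 0\<close> e1 by (simp add: Epos_def)
    then have "(a,b) \<in> adj (Epos w)" using eab by simp
    then have "(\<alpha>,b) \<in> (adj (Epos w))\<^sup>*" using comp_r[OF ab(2)] by (meson rtrancl.rtrancl_into_rtrancl)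
    then have "b \<in> S" using cp(1) by (auto simp: comp_def)
    then show False using ab by simp
  qed
  show ?thesis using I Z N a(2) by (simp add: A_def)
qed

lemma strat_char:
  assumes "\<alpha> \<in> V" "w \<in> extensional E"
  shows "corr_pt V E (cls \<alpha> w) = (S,P) \<longleftrightarrow> \<alpha> \<in> S \<and> w \<in> A S P"
proof
  assume h: "corr_pt V E (cls \<alpha> w) = (S,P)"
  then have cp: "comp \<alpha> w = S" "S // (ctr \<alpha> w)\<^sup>* = P" using corr_pt_cls[OF assms(1)] by auto
  show "\<alpha> \<in> S \<and> w \<in> A S P" using strat_A[OF assms cp] cp(1) comp_self by blast
next
  assume "\<alpha> \<in> S \<and> w \<in> A S P"
  then show "corr_pt V E (cls \<alpha> w) = (S,P)" using corr_pt_cls[OF assms(1)] comp_eq blocks by simp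
qed

end
end



lemma openin_Y:
  "openin (arb_space V E) U \<longleftrightarrow> U \<subseteq> topspace (arb_disj V) // arb_rel V E \<and>
     openin (arb_disj V) {z \<in> topspace (arb_disj V). arb_rel V E `` {z} \<in> U}"
  unfolding arb_space_def quotient_topology_def
  by (simp only: topology_inverse'[OF istopology_quotient])

lemma topspace_Y: "topspace (arb_space V E) = topspace (arb_disj V) // arb_rel V E"
proof -
  let ?Q = "topspace (arb_disj V) // arb_rel V E"
  have "{z \<in> topspace (arb_disj V). arb_rel V E `` {z} \<in> ?Q} = topspace (arb_disj V)"
    by (auto intro: quotientI)
  then have "openin (arb_space V E) ?Q" unfolding openin_Y by simp
  then have "?Q \<subseteq> topspace (arb_space V E)" by (rule openin_subset)
  moreover have "topspace (arb_space V E) \<subseteq> ?Q"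
  proof
    fix c assume "c \<in> topspace (arb_space V E)"
    then obtain U where U: "openin (arb_space V E) U" "c \<in> U" unfolding topspace_def by blast
    have "U \<subseteq> ?Q" using U(1) unfolding openin_Y by (rule conjunct1)
    then show "c \<in> ?Q" using U(2) by blast
  qed
  ultimately show ?thesis by blast
qed

lemma closedin_Y:
  "closedin (arb_space V E) F \<longleftrightarrow> F \<subseteq> topspace (arb_disj V) // arb_rel V E \<and>
     closedin (arb_disj V) {z \<in> topspace (arb_disj V). arb_rel V E `` {z} \<in> F}"
proof -
  let ?Q = "topspace (arb_disj V) // arb_rel V E" and ?X = "topspace (arb_disj V)"
  have e: "{z \<in> ?X. arb_rel V E `` {z} \<in> ?Q - F} = ?X - {z \<in> ?X. arb_rel V E `` {z} \<in> F}"
    by (auto intro: quotientI)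
  show ?thesis unfolding closedin_def topspace_Y openin_Y e by auto
qed

lemma cont_pi: "continuous_map (arb_disj V) (arb_space V E) (\<lambda>z. arb_rel V E `` {z})"
  unfolding continuous_map_def topspace_Y openin_Y by (auto intro: quotientI)

lemma topPX: "topspace (product_topology (\<lambda>_. euclideanreal) I) = extensional I"
  by (auto simp: PiE_def)

lemma PiE_UNIV_ext: "PiE I (\<lambda>_. UNIV) = extensional I"
  by (auto simp: PiE_def)

context tr begin

lemma finE: "finite E"
proof -
  have "E \<subseteq> Pow V" using edge_inV[OF eok] by blast
  then show ?thesis using finV by (meson finite_Pow_iff finite_subset)
qed

lemma topY_cls: "c \<in> topspace (arb_space V E) \<longleftrightarrow> (\<exists>\<alpha> w. \<alpha> \<in> V \<and> w \<in> extensional E \<and> c = cls \<alpha> w)"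
proof
  assume "c \<in> topspace (arb_space V E)"
  then obtain z where z: "z \<in> topspace (arb_disj V)" "c = arb_rel V E `` {z}"
    unfolding topspace_Y by (auto elim: quotientE)
  from class_cls[OF z(1)] obtain \<alpha> w where "\<alpha> \<in> V" "w \<in> extensional E" "arb_rel V E `` {z} = cls \<alpha> w"
    by metis
  then show "\<exists>\<alpha> w. \<alpha> \<in> V \<and> w \<in> extensional E \<and> c = cls \<alpha> w" using z by blast
next
  assume "\<exists>\<alpha> w. \<alpha> \<in> V \<and> w \<in> extensional E \<and> c = cls \<alpha> w"
  then obtain \<alpha> w where a: "\<alpha> \<in> V" "w \<in> extensional E" "c = cls \<alpha> w" by blast
  have t: "(\<alpha>, chart \<alpha> w) \<in> topspace (arb_disj V)" using a chart_ext by (simp add: topX)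
  show "c \<in> topspace (arb_space V E)" unfolding topspace_Y
    using quotientI[OF t, of "arb_rel V E"] cls_class[OF a(1,2)] a(3) by simp
qed

lemma cont_chart: "\<alpha> \<in> V \<Longrightarrow> continuous_map (product_topology (\<lambda>_. euclideanreal) E)
     (product_topology (\<lambda>_. euclideanreal) (V - {\<alpha>})) (chart \<alpha>)"
  unfolding continuous_map_componentwise
proof (intro conjI ballI)
  show "chart \<alpha> ` topspace (product_topology (\<lambda>_. euclideanreal) E) \<subseteq> extensional (V - {\<alpha>})"
    using chart_ext by blast
  fix g assume True: "\<alpha> \<in> V" and g: "g \<in> V - {\<alpha>}"
  have "pe \<alpha> g \<in> E" using pe_props(1)[OF True] g by simp
  then show "continuous_map (product_topology (\<lambda>_. euclideanreal) E) euclideanreal (\<lambda>x. chart \<alpha> x g)"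
    using g continuous_map_product_projection[of "pe \<alpha> g" E "\<lambda>_. euclideanreal"]
    by (simp add: chart_def)
qed

lemma cont_W: "\<beta> \<in> V \<Longrightarrow> continuous_map (product_topology (\<lambda>_. euclideanreal) (V - {\<beta>}))
     (product_topology (\<lambda>_. euclideanreal) E) (W \<beta>)"
  unfolding continuous_map_componentwise
proof (intro conjI ballI)
  assume b: "\<beta> \<in> V"
  show "W \<beta> ` topspace (product_topology (\<lambda>_. euclideanreal) (V - {\<beta>})) \<subseteq> extensional E"
    using W_ext by blast
  fix e assume e: "e \<in> E"
  have "far \<beta> e \<in> V - {\<beta>}" using far_props[OF e b] by simp
  then show "continuous_map (product_topology (\<lambda>_. euclideanreal) (V - {\<beta>})) euclideanreal (\<lambda>x. W \<beta> x e)"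
    using e continuous_map_product_projection[of "far \<beta> e" "V - {\<beta>}" "\<lambda>_. euclideanreal"]
    by (simp add: W_def)
qed

lemma cont_f: "\<alpha> \<in> V \<Longrightarrow> continuous_map (product_topology (\<lambda>_. euclideanreal) E) (arb_space V E)
   (\<lambda>w. arb_rel V E `` {(\<alpha>, chart \<alpha> w)})"
proof -
  assume a: "\<alpha> \<in> V"
  have c1: "continuous_map (product_topology (\<lambda>_. euclideanreal) E) (arb_disj V) ((\<lambda>x. (\<alpha>,x)) \<circ> chart \<alpha>)"
    unfolding arb_disj_def
    by (rule continuous_map_compose[OF cont_chart[OF a]])
       (rule continuous_map_component_injection[OF a, of "\<lambda>\<alpha>. product_topology (\<lambda>_. euclideanreal) (V - {\<alpha>})", simplified])
  have "continuous_map (product_topology (\<lambda>_. euclideanreal) E) (arb_space V E)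
     ((\<lambda>z. arb_rel V E `` {z}) \<circ> ((\<lambda>x. (\<alpha>,x)) \<circ> chart \<alpha>))"
    by (rule continuous_map_compose[OF c1 cont_pi])
  then show ?thesis by (simp add: o_def)
qed

context
  fixes S P assumes C: "is_corr V E (S,P)"
begin

definition setA :: "'v set \<Rightarrow> real set" where
  "setA e = (if e \<in> In P then {0<..} else if e \<in> Zr S P then {0} else if e \<in> Ng S then {..<0} else UNIV)"
definition setC :: "'v set \<Rightarrow> real set" where
  "setC e = (if e \<in> In P then {0..} else if e \<in> Zr S P then {0} else if e \<in> Ng S then {..0} else UNIV)"

lemma disj: "e \<in> Zr S P \<Longrightarrow> e \<notin> In P" "e \<in> Ng S \<Longrightarrow> e \<notin> In P" "e \<in> Ng S \<Longrightarrow> e \<notin> Zr S P"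
  using In_sub[OF CP[OF C]] by (auto simp: Zr_def Ng_def)

lemma A_Pi: "A S P = PiE E setA"
proof -
  have "w e \<in> setA e \<longleftrightarrow> (e \<in> In P \<longrightarrow> 0 < w e) \<and> (e \<in> Zr S P \<longrightarrow> w e = 0) \<and> (e \<in> Ng S \<longrightarrow> w e < 0)" for w e
    using disj[of e] by (auto simp: setA_def)
  moreover have "In P \<subseteq> E" "Zr S P \<subseteq> E" "Ng S \<subseteq> E" by (auto simp: In_def Zr_def Ng_def)
  ultimately show ?thesis unfolding A_def PiE_def Pi_def by blast
qed

lemma cA_Pi: "cA S P = PiE E setC"
proof -
  have "w e \<in> setC e \<longleftrightarrow> (e \<in> In P \<longrightarrow> 0 \<le> w e) \<and> (e \<in> Zr S P \<longrightarrow> w e = 0) \<and> (e \<in> Ng S \<longrightarrow> w e \<le> 0)" for w e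
    using disj[of e] by (auto simp: setC_def)
  moreover have "In P \<subseteq> E" "Zr S P \<subseteq> E" "Ng S \<subseteq> E" by (auto simp: In_def Zr_def Ng_def)
  ultimately show ?thesis unfolding cA_def PiE_def Pi_def by blast
qed

lemma closure_A: "product_topology (\<lambda>_. euclideanreal) E closure_of A S P = cA S P"
proof -
  have "closure (setA e) = setC e" for e
    by (simp add: setA_def setC_def closure_closed)
  then show ?thesis unfolding A_Pi cA_Pi closure_of_product_topology by simp
qed

lemma closed_setC: "closed (setC e)" by (simp add: setC_def)

definition Cl :: "('v \<times> ('v \<Rightarrow> real)) set set" where
  "Cl = {cls \<alpha> w | \<alpha> w. \<alpha> \<in> S \<and> w \<in> cA S P}"

lemma stratum_cls: "c \<in> stratum V E (S,P) \<longleftrightarrow> (\<exists>\<alpha> w. \<alpha> \<in> S \<and> w \<in> A S P \<and> c = cls \<alpha> w)"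
proof
  assume "c \<in> stratum V E (S,P)"
  then have c: "c \<in> topspace (arb_space V E)" "corr_pt V E c = (S,P)" by (auto simp: stratum_def)
  then obtain \<alpha> w where a: "\<alpha> \<in> V" "w \<in> extensional E" "c = cls \<alpha> w" using topY_cls by blast
  then show "\<exists>\<alpha> w. \<alpha> \<in> S \<and> w \<in> A S P \<and> c = cls \<alpha> w" using strat_char[OF C a(1,2)] c(2) by blast
next
  assume "\<exists>\<alpha> w. \<alpha> \<in> S \<and> w \<in> A S P \<and> c = cls \<alpha> w"
  then obtain \<alpha> w where a: "\<alpha> \<in> S" "w \<in> A S P" "c = cls \<alpha> w" by blast
  have av: "\<alpha> \<in> V" "w \<in> extensional E" using a SV[OF C] by (auto simp: A_def)
  have "c \<in> topspace (arb_space V E)" using topY_cls av a(3) by blast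
  moreover have "corr_pt V E c = (S,P)" using strat_char[OF C av] a by simp
  ultimately show "c \<in> stratum V E (S,P)" by (simp add: stratum_def)
qed

lemma strat_Cl: "stratum V E (S,P) \<subseteq> Cl"
  unfolding Cl_def using stratum_cls A_cA[OF C] by blast

lemma Cl_dense: "Cl \<subseteq> arb_space V E closure_of stratum V E (S,P)"
proof
  fix c assume "c \<in> Cl"
  then obtain \<alpha> w where a: "\<alpha> \<in> S" "w \<in> cA S P" "c = cls \<alpha> w" by (auto simp: Cl_def)
  have av: "\<alpha> \<in> V" using a SV[OF C] by auto
  let ?f = "\<lambda>w. arb_rel V E `` {(\<alpha>, chart \<alpha> w)}"
  have fA: "?f ` A S P \<subseteq> stratum V E (S,P)"
  proof
    fix c assume "c \<in> ?f ` A S P"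
    then obtain v where v: "v \<in> A S P" "c = ?f v" by blast
    have "c = cls \<alpha> v" using cls_class[OF av, of v] v by (simp add: A_def)
    then show "c \<in> stratum V E (S,P)" using stratum_cls a(1) v(1) by blast
  qed
  have "?f w \<in> ?f ` (product_topology (\<lambda>_. euclideanreal) E closure_of A S P)"
    using a(2) closure_A by simp
  also have "\<dots> \<subseteq> arb_space V E closure_of (?f ` A S P)"
    by (rule continuous_map_image_closure_subset[OF cont_f[OF av]])
  also have "\<dots> \<subseteq> arb_space V E closure_of stratum V E (S,P)"
    by (rule closure_of_mono[OF fA])
  finally show "c \<in> arb_space V E closure_of stratum V E (S,P)"
    using cls_class[OF av, of w] a(2,3) by (simp add: cA_def)
qed

lemma Cl_closed: "closedin (arb_space V E) Cl"
proof -
  obtain \<alpha>0 where a0: "\<alpha>0 \<in> S" using S_ne[OF C] by blast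
  have sub: "Cl \<subseteq> topspace (arb_disj V) // arb_rel V E"
    unfolding topspace_Y[symmetric] Cl_def using topY_cls SV[OF C] by (auto simp: cA_def)
  let ?PE = "product_topology (\<lambda>_. euclideanreal) E"
  have slice: "closedin (product_topology (\<lambda>_. euclideanreal) (V - {\<beta>}))
      {x. (\<beta>,x) \<in> {z \<in> topspace (arb_disj V). arb_rel V E `` {z} \<in> Cl}}" if b: "\<beta> \<in> V" for \<beta>
  proof -
    define K where "K = {w \<in> cA S P. (\<beta>,\<alpha>0) \<in> (adj (Epos w))\<^sup>*}"
    define Fs where "Fs = {F. F \<subseteq> E \<and> (\<beta>,\<alpha>0) \<in> (adj F)\<^sup>*}"
    have K_eq: "K = cA S P \<inter> (\<Union>F\<in>Fs. PiE E (\<lambda>e. if e \<in> F then {0..} else UNIV))"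
    proof (intro equalityI subsetI)
      fix w assume "w \<in> K"
      then have w: "w \<in> cA S P" "(\<beta>,\<alpha>0) \<in> (adj (Epos w))\<^sup>*" by (auto simp: K_def)
      have "Epos w \<in> Fs" using w(2) Epos_sub by (simp add: Fs_def)
      moreover have "w \<in> PiE E (\<lambda>e. if e \<in> Epos w then {0..} else UNIV)"
        using w(1) by (auto simp: cA_def Epos_def PiE_def Pi_def)
      ultimately show "w \<in> cA S P \<inter> (\<Union>F\<in>Fs. PiE E (\<lambda>e. if e \<in> F then {0..} else UNIV))"
        using w(1) by blast
    next
      fix w assume "w \<in> cA S P \<inter> (\<Union>F\<in>Fs. PiE E (\<lambda>e. if e \<in> F then {0..} else UNIV))"
      then obtain F where w: "w \<in> cA S P" "F \<in> Fs" "w \<in> PiE E (\<lambda>e. if e \<in> F then {0..} else UNIV)" by blast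
      have "F \<subseteq> Epos w"
      proof
        fix e assume "e \<in> F"
        then have "e \<in> E" using w(2) by (auto simp: Fs_def)
        then have "w e \<in> (if e \<in> F then {0..} else UNIV)" using w(3) by (auto simp: PiE_def Pi_def)
        then show "e \<in> Epos w" using \<open>e \<in> F\<close> \<open>e \<in> E\<close> by (simp add: Epos_def)
      qed
      moreover have "(\<beta>,\<alpha>0) \<in> (adj F)\<^sup>*" using w(2) by (simp add: Fs_def)
      ultimately have "(\<beta>,\<alpha>0) \<in> (adj (Epos w))\<^sup>*" by (rule rtr_mono)
      then show "w \<in> K" using w(1) unfolding K_def by blast
    qed
    have fin: "finite Fs" unfolding Fs_def using finE by (auto intro: finite_subset[of _ "Pow E"])
    have cl1: "closedin ?PE (cA S P)" unfolding cA_Pi closedin_product_topology using closed_setC by simp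
    have cl2: "closedin ?PE (PiE E (\<lambda>e. if e \<in> F then {0..} else UNIV))" for F :: "'v set set"
      unfolding closedin_product_topology by auto
    have clK: "closedin ?PE K" unfolding K_eq
      using cl1 cl2 fin by (intro closedin_Int closedin_Union) auto
    have pre: "closedin (product_topology (\<lambda>_. euclideanreal) (V - {\<beta>}))
       {x \<in> topspace (product_topology (\<lambda>_. euclideanreal) (V - {\<beta>})). W \<beta> x \<in> K}"
      by (rule closedin_continuous_map_preimage[OF cont_W[OF b] clK])
    have "{x. (\<beta>,x) \<in> {z \<in> topspace (arb_disj V). arb_rel V E `` {z} \<in> Cl}} =
          {x \<in> topspace (product_topology (\<lambda>_. euclideanreal) (V - {\<beta>})). W \<beta> x \<in> K}"
    proof (intro equalityI subsetI)
      fix x assume "x \<in> {x. (\<beta>,x) \<in> {z \<in> topspace (arb_disj V). arb_rel V E `` {z} \<in> Cl}}"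
      then have x: "x \<in> extensional (V - {\<beta>})" "arb_rel V E `` {(\<beta>,x)} \<in> Cl" by (auto simp: topX)
      have xc: "x = chart \<beta> (W \<beta> x)" using chart_W[OF b x(1)] by simp
      have "arb_rel V E `` {(\<beta>,x)} = cls \<beta> (W \<beta> x)" using cls_class[OF b W_ext, of \<beta> x] xc by simp
      then obtain \<alpha> w where aw: "\<alpha> \<in> S" "w \<in> cA S P" "cls \<beta> (W \<beta> x) = cls \<alpha> w"
        using x(2) by (auto simp: Cl_def)
      have av: "\<alpha> \<in> V" using aw SV[OF C] by auto
      have wE: "w \<in> extensional E" using aw(2) by (simp add: cA_def)
      have "cls \<beta> (W \<beta> x) = cls \<alpha> w \<longleftrightarrow> W \<beta> x = w \<and> \<alpha> \<in> comp \<beta> (W \<beta> x)"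
        by (rule cls_eq[OF b W_ext av wE])
      then have ww1: "W \<beta> x = w" "\<alpha> \<in> comp \<beta> (W \<beta> x)" using aw(3) by auto
      then have ww: "W \<beta> x = w" "\<alpha> \<in> comp \<beta> w" by auto
      have "\<alpha>0 \<in> comp \<alpha> w" using S_sub_comp[OF C aw(1,2)] a0 by blast
      then have "(\<alpha>,\<alpha>0) \<in> (adj (Epos w))\<^sup>*" unfolding comp_def by simp
      moreover have "(\<beta>,\<alpha>) \<in> (adj (Epos w))\<^sup>*" using ww(2) unfolding comp_def by simp
      ultimately have "(\<beta>,\<alpha>0) \<in> (adj (Epos w))\<^sup>*" by (rule rtrancl_trans[rotated])
      then show "x \<in> {x \<in> topspace (product_topology (\<lambda>_. euclideanreal) (V - {\<beta>})). W \<beta> x \<in> K}"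
        using ww aw x(1) by (simp add: K_def PiE_UNIV_ext)
    next
      fix x assume "x \<in> {x \<in> topspace (product_topology (\<lambda>_. euclideanreal) (V - {\<beta>})). W \<beta> x \<in> K}"
      then have x: "x \<in> extensional (V - {\<beta>})" "W \<beta> x \<in> cA S P" "(\<beta>,\<alpha>0) \<in> (adj (Epos (W \<beta> x)))\<^sup>*"
        by (auto simp: PiE_UNIV_ext K_def)
      have xc: "x = chart \<beta> (W \<beta> x)" using chart_W[OF b x(1)] by simp
      have e1: "arb_rel V E `` {(\<beta>,x)} = cls \<beta> (W \<beta> x)" using cls_class[OF b W_ext, of \<beta> x] xc by simp
      have av0: "\<alpha>0 \<in> V" using a0 SV[OF C] by auto
      have "cls \<beta> (W \<beta> x) = cls \<alpha>0 (W \<beta> x)" using cls_eq[OF b W_ext av0 W_ext] x(3) by (simp add: comp_def)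
      then have "arb_rel V E `` {(\<beta>,x)} \<in> Cl" using e1 a0 x(2) by (auto simp: Cl_def)
      then show "x \<in> {x. (\<beta>,x) \<in> {z \<in> topspace (arb_disj V). arb_rel V E `` {z} \<in> Cl}}"
        using b x(1) by (simp add: topX)
    qed
    then show ?thesis using pre by simp
  qed
  have "closedin (arb_disj V) {z \<in> topspace (arb_disj V). arb_rel V E `` {z} \<in> Cl}"
    unfolding arb_disj_def closedin_sum_topology
  proof (intro conjI ballI)
    show "{z \<in> topspace (sum_topology (\<lambda>\<alpha>. product_topology (\<lambda>_. euclideanreal) (V - {\<alpha>})) V).
           arb_rel V E `` {z} \<in> Cl} \<subseteq> Sigma V (topspace \<circ> (\<lambda>\<alpha>. product_topology (\<lambda>_. euclideanreal) (V - {\<alpha>})))"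
      by auto
    fix \<beta> assume "\<beta> \<in> V"
    from slice[OF this] show "closedin (product_topology (\<lambda>_. euclideanreal) (V - {\<beta>}))
      {x. (\<beta>, x) \<in> {z \<in> topspace (sum_topology (\<lambda>\<alpha>. product_topology (\<lambda>_. euclideanreal) (V - {\<alpha>})) V).
           arb_rel V E `` {z} \<in> Cl}}" unfolding arb_disj_def .
  qed
  then show ?thesis unfolding closedin_Y using sub by simp
qed

lemma closure_eq: "arb_space V E closure_of stratum V E (S,P) = Cl"
  using closure_of_minimal[OF strat_Cl Cl_closed] Cl_dense by blast

end
end



context tr begin

context
  fixes S' P' assumes C': "is_corr V E (S',P')"
begin

definition blk :: "'v \<Rightarrow> 'v set" where
  "blk x = (THE B. B \<in> P' \<and> x \<in> B)"

lemma blk_props: "x \<in> S' \<Longrightarrow> blk x \<in> P' \<and> x \<in> blk x"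
proof -
  assume x: "x \<in> S'"
  have "\<exists>!B. B \<in> P' \<and> x \<in> B" using part_ex[OF CP[OF C'] x] part_uniq[OF CP[OF C']] by blast
  then show ?thesis unfolding blk_def by (rule theI')
qed

lemma blk_eq: "B \<in> P' \<Longrightarrow> x \<in> B \<Longrightarrow> blk x = B"
proof -
  assume B: "B \<in> P'" "x \<in> B"
  have x: "x \<in> S'" using part_sub[OF CP[OF C'] B(1)] B(2) by blast
  show ?thesis using blk_props[OF x] part_uniq[OF CP[OF C'] _ B(1)] B(2) by blast
qed

abbreviation QE where "QE \<equiv> quot_edges E P'"

lemma qe_iff: "{X,Y} \<in> QE \<longleftrightarrow> X \<in> P' \<and> Y \<in> P' \<and> X \<noteq> Y \<and> (\<exists>a\<in>X. \<exists>b\<in>Y. {a,b} \<in> E)"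
proof
  assume "{X,Y} \<in> QE"
  then obtain B1 B2 where h: "{X,Y} = {B1,B2}" "B1 \<in> P'" "B2 \<in> P'" "B1 \<noteq> B2" "\<exists>a\<in>B1. \<exists>b\<in>B2. {a,b} \<in> E"
    unfolding quot_edges_def by blast
  from h(1) have "(X = B1 \<and> Y = B2) \<or> (X = B2 \<and> Y = B1)" by (simp add: doubleton_eq_iff)
  then show "X \<in> P' \<and> Y \<in> P' \<and> X \<noteq> Y \<and> (\<exists>a\<in>X. \<exists>b\<in>Y. {a,b} \<in> E)"
  proof
    assume "X = B1 \<and> Y = B2" then show ?thesis using h by blast
  next
    assume xy: "X = B2 \<and> Y = B1"
    obtain a b where "a \<in> B1" "b \<in> B2" "{a,b} \<in> E" using h(5) by blast
    then have "b \<in> X" "a \<in> Y" "{b,a} \<in> E" using xy by (auto simp: insert_commute)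
    then show ?thesis using h xy by blast
  qed
next
  assume "X \<in> P' \<and> Y \<in> P' \<and> X \<noteq> Y \<and> (\<exists>a\<in>X. \<exists>b\<in>Y. {a,b} \<in> E)"
  then show "{X,Y} \<in> QE" unfolding quot_edges_def by blast
qed

lemma qe_form: "f \<in> QE \<Longrightarrow> \<exists>X Y. f = {X,Y} \<and> X \<noteq> Y"
  unfolding quot_edges_def by blast

lemma in_block_conn:
  assumes "C \<in> P'" "x \<in> C" "y \<in> C" "\<not> {a,b} \<subseteq> C"
  shows "(x,y) \<in> (adj (E - {{a,b}}))\<^sup>*"
proof -
  have "(x,y) \<in> (adj (induced_edges E C))\<^sup>*" using subtree_conn[OF CB[OF C' assms(1)] assms(2,3)] .
  moreover have "induced_edges E C \<subseteq> E - {{a,b}}" using assms(4) by (auto simp: induced_edges_def)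
  ultimately show ?thesis by (rule rtr_mono[rotated])
qed

lemma qbridge:
  assumes f: "{B1,B2} \<in> QE"
  shows "(B1,B2) \<notin> (adj (QE - {{B1,B2}}))\<^sup>*"
proof
  assume r: "(B1,B2) \<in> (adj (QE - {{B1,B2}}))\<^sup>*"
  have h: "B1 \<in> P'" "B2 \<in> P'" "B1 \<noteq> B2" "\<exists>a\<in>B1. \<exists>b\<in>B2. {a,b} \<in> E" using f qe_iff by blast+
  obtain a b where ab: "a \<in> B1" "b \<in> B2" "{a,b} \<in> E" using h(4) by blast
  have notin: "\<not> {a,b} \<subseteq> C" if "C \<in> P'" for C
  proof
    assume "{a,b} \<subseteq> C"
    then have "C = B1" "C = B2" using blk_eq[OF that] blk_eq[OF h(1) ab(1)] blk_eq[OF h(2) ab(2)] by auto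
    then show False using h(3) by simp
  qed
  have lift: "\<forall>x\<in>B1. \<forall>y\<in>D. (x,y) \<in> (adj (E - {{a,b}}))\<^sup>*" if "(B1,D) \<in> (adj (QE - {{B1,B2}}))\<^sup>*" for D
    using that
  proof (induction rule: rtrancl_induct)
    case base then show ?case using in_block_conn[OF h(1) _ _ notin[OF h(1)]] by blast
  next
    case (step D D')
    have q: "{D,D'} \<in> QE" "{D,D'} \<noteq> {B1,B2}" using step(2) by auto
    then have hq: "D \<in> P'" "D' \<in> P'" "\<exists>d\<in>D. \<exists>d'\<in>D'. {d,d'} \<in> E" using qe_iff by blast+
    obtain d d' where dd: "d \<in> D" "d' \<in> D'" "{d,d'} \<in> E" using hq(3) by blast
    have ne: "{d,d'} \<noteq> {a,b}"
    proof
      assume "{d,d'} = {a,b}"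
      then have "(d = a \<and> d' = b) \<or> (d = b \<and> d' = a)" by (simp add: doubleton_eq_iff)
      then show False
      proof
        assume "d = a \<and> d' = b"
        then have "D = B1" "D' = B2" using blk_eq[OF hq(1) dd(1)] blk_eq[OF hq(2) dd(2)]
            blk_eq[OF h(1) ab(1)] blk_eq[OF h(2) ab(2)] by auto
        then show False using q(2) by simp
      next
        assume "d = b \<and> d' = a"
        then have "D = B2" "D' = B1" using blk_eq[OF hq(1) dd(1)] blk_eq[OF hq(2) dd(2)]
            blk_eq[OF h(1) ab(1)] blk_eq[OF h(2) ab(2)] by auto
        then show False using q(2) by (simp add: insert_commute)
      qed
    qed
    show ?case
    proof (intro ballI)
      fix x y assume xy: "x \<in> B1" "y \<in> D'"
      have 1: "(x,d) \<in> (adj (E - {{a,b}}))\<^sup>*" using step.IH xy(1) dd(1) by blast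
      have 2: "(d,d') \<in> adj (E - {{a,b}})" using dd(3) ne by simp
      have 3: "(d',y) \<in> (adj (E - {{a,b}}))\<^sup>*" using in_block_conn[OF hq(2) dd(2) xy(2) notin[OF hq(2)]] .
      show "(x,y) \<in> (adj (E - {{a,b}}))\<^sup>*" using 1 2 3 by (meson rtrancl.rtrancl_into_rtrancl rtrancl_trans)
    qed
  qed
  have "(a,b) \<in> (adj (E - {{a,b}}))\<^sup>*" using lift[OF r] ab by blast
  then show False using bridge[OF T ab(3)] by simp
qed

definition Cq :: "'v set \<Rightarrow> 'v set set" where
  "Cq U = {B \<in> P'. B \<subseteq> U}"

lemma finP': "finite P'"
proof -
  have "\<Union>P' = S'" using CP[OF C'] by (simp add: partition_on_def)
  moreover have "finite S'" using SV[OF C'] finV finite_subset by blast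
  ultimately show ?thesis by (metis finite_UnionD)
qed

lemma Cq_union: "U \<subseteq> S' \<Longrightarrow> (\<And>x. x \<in> U \<Longrightarrow> blk x \<subseteq> U) \<Longrightarrow> \<Union>(Cq U) = U"
proof (intro equalityI subsetI)
  fix x assume "x \<in> \<Union>(Cq U)" then show "x \<in> U" by (auto simp: Cq_def)
next
  fix x assume U: "U \<subseteq> S'" "\<And>x. x \<in> U \<Longrightarrow> blk x \<subseteq> U" and x: "x \<in> U"
  then have "blk x \<in> Cq U" "x \<in> blk x" using blk_props[of x] by (auto simp: Cq_def)
  then show "x \<in> \<Union>(Cq U)" by blast
qed

lemma QT:
  assumes U: "U \<subseteq> S'" "U \<noteq> {}" "\<And>x. x \<in> U \<Longrightarrow> blk x \<subseteq> U" "is_subtree V E U"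
  shows "is_subtree P' QE (Cq U)"
proof -
  let ?F = "induced_edges QE (Cq U)"
  have sub: "Cq U \<subseteq> P'" by (auto simp: Cq_def)
  have blkU: "x \<in> U \<Longrightarrow> blk x \<in> Cq U \<and> x \<in> blk x" for x using blk_props[of x] U by (auto simp: Cq_def)
  have ne: "Cq U \<noteq> {}" using U(2) blkU by blast
  have fin: "finite (Cq U)" using finP' sub finite_subset by blast
  have eok': "edges_ok (Cq U) ?F"
    unfolding edges_ok_def
  proof
    fix e assume e: "e \<in> ?F"
    then have "e \<in> QE" by (simp add: induced_edges_def)
    then obtain X Y where "e = {X,Y}" "X \<noteq> Y" using qe_form by blast
    then show "\<exists>a b. a \<noteq> b \<and> a \<in> Cq U \<and> b \<in> Cq U \<and> e = {a, b}" using e by (auto simp: induced_edges_def)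
  qed
  have down: "(blk x, blk y) \<in> (adj ?F)\<^sup>*" if "(x,y) \<in> (adj (induced_edges E U))\<^sup>*" "x \<in> U" for x y
    using that
  proof (induction rule: rtrancl_induct)
    case base then show ?case by simp
  next
    case (step c d)
    have cd: "{c,d} \<in> E" "c \<in> U" "d \<in> U" using step(2) by (auto simp: induced_edges_def)
    show ?case
    proof (cases "blk c = blk d")
      case True then show ?thesis using step.IH step(4) by simp
    next
      case False
      have bc: "blk c \<in> Cq U" "c \<in> blk c" "blk d \<in> Cq U" "d \<in> blk d" using blkU cd(2,3) by auto
      then have "{blk c, blk d} \<in> QE" using qe_iff False cd(1) sub by blast
      moreover have "{blk c, blk d} \<subseteq> Cq U" using bc by simp
      ultimately have "(blk c, blk d) \<in> adj ?F" by (simp add: induced_edges_def)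
      then show ?thesis using step.IH step(4) by (meson rtrancl.rtrancl_into_rtrancl)
    qed
  qed
  have conn: "graph_connected (Cq U) ?F"
  proof (rule rtr_conn)
    show "\<Union>?F \<subseteq> Cq U" by (auto simp: induced_edges_def)
    fix X Y assume XY: "X \<in> Cq U" "Y \<in> Cq U"
    then have XY': "X \<in> P'" "Y \<in> P'" "X \<subseteq> U" "Y \<subseteq> U" by (auto simp: Cq_def)
    obtain x y where xy: "x \<in> X" "y \<in> Y" using part_ne[OF CP[OF C'] XY'(1)] part_ne[OF CP[OF C'] XY'(2)] by blast
    have "(x,y) \<in> (adj (induced_edges E U))\<^sup>*" using subtree_conn[OF U(4)] xy XY' by blast
    from down[OF this] have "(blk x, blk y) \<in> (adj ?F)\<^sup>*" using xy XY' by blast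
    then show "(X,Y) \<in> (adj ?F)\<^sup>*" using blk_eq[OF XY'(1) xy(1)] blk_eq[OF XY'(2) xy(2)] by simp
  qed
  have acyc: "acyclic_graph (Cq U) ?F"
  proof (rule acyclic_crit)
    fix X Y assume "{X,Y} \<in> ?F" "X \<noteq> Y"
    then have q: "{X,Y} \<in> QE" by (simp add: induced_edges_def)
    show "(X,Y) \<notin> (adj (?F - {{X,Y}}))\<^sup>*"
    proof
      assume "(X,Y) \<in> (adj (?F - {{X,Y}}))\<^sup>*"
      moreover have "?F - {{X,Y}} \<subseteq> QE - {{X,Y}}" by (auto simp: induced_edges_def)
      ultimately have "(X,Y) \<in> (adj (QE - {{X,Y}}))\<^sup>*" by (rule rtr_mono[rotated])
      then show False using qbridge[OF q] by simp
    qed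
  qed
  show ?thesis unfolding is_subtree_def is_tree_def using sub ne fin eok' conn acyc by simp
qed

end

end



context tr begin

context
  fixes S P S' P' assumes C: "is_corr V E (S,P)" and C': "is_corr V E (S',P')"
begin

definition BC where "BC \<longleftrightarrow> (\<forall>B'\<in>P'. B' \<inter> S \<noteq> {} \<longrightarrow> (\<exists>B\<in>P. B' \<subseteq> B))"

lemma key_dir1: "corr_ge E (S,P) (S',P') \<Longrightarrow> S \<subseteq> S' \<and> BC"
proof -
  assume "corr_ge E (S,P) (S',P')"
  then obtain Q Pq where q: "is_corr P' (quot_edges E P') (Q,Pq)" "(S,P) = corr_comp (Q,Pq) (S',P')"
    unfolding corr_ge_def by auto
  have SP: "S = \<Union>Q" "P = Union ` Pq" using q(2) by (auto simp: corr_comp_def)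
  have QP: "Q \<subseteq> P'" using q(1) by (simp add: is_corr_def is_subtree_def)
  have pq: "partition_on Q Pq" using q(1) by (simp add: is_corr_def)
  have "S \<subseteq> S'" using SP(1) QP CP[OF C'] by (auto simp: partition_on_def)
  moreover have BC unfolding BC_def
  proof (intro ballI impI)
    fix B' assume B': "B' \<in> P'" "B' \<inter> S \<noteq> {}"
    then obtain x B'' where x: "x \<in> B'" "x \<in> B''" "B'' \<in> Q" using SP(1) by blast
    have "B'' = B'" using part_uniq[OF CP[OF C'] _ B'(1)] x QP by blast
    then have "B' \<in> Q" using x by simp
    then obtain Cc where Cc: "Cc \<in> Pq" "B' \<in> Cc" using pq unfolding partition_on_def by blast
    then show "\<exists>B\<in>P. B' \<subseteq> B" using SP(2) by blast
  qed
  ultimately show ?thesis by simp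
qed

lemma key_dir2:
  assumes sub: "S \<subseteq> S'" and bc: BC
  shows "corr_ge E (S,P) (S',P')"
proof -
  have blkS: "blk P' x \<subseteq> B" if "B \<in> P" "x \<in> B" for x B
  proof -
    have xS: "x \<in> S" using part_sub[OF CP[OF C] that(1)] that(2) by blast
    then have xb: "blk P' x \<in> P'" "x \<in> blk P' x" using blk_props[OF C'] sub by auto
    then obtain B'' where "B'' \<in> P" "blk P' x \<subseteq> B''" using bc xS unfolding BC_def by blast
    moreover then have "B'' = B" using part_uniq[OF CP[OF C] _ that(1)] xb that(2) by blast
    ultimately show ?thesis by simp
  qed
  have blkS2: "blk P' x \<subseteq> S" if xS: "x \<in> S" for x
  proof -
    obtain B where "B \<in> P" "x \<in> B" using part_ex[OF CP[OF C] xS] by blast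
    then show ?thesis using blkS part_sub[OF CP[OF C]] by blast
  qed
  let ?q = "(Cq P' S, Cq P' ` P)"
  have BS': "B \<subseteq> S'" if "B \<in> P" for B using part_sub[OF CP[OF C] that] sub by blast
  have unB: "\<Union>(Cq P' B) = B" if "B \<in> P" for B using Cq_union[OF C' BS'[OF that]] blkS that by blast
  have unS: "\<Union>(Cq P' S) = S" using Cq_union[OF C' sub] blkS2 by blast
  have t1: "is_subtree P' (quot_edges E P') (Cq P' S)"
    using QT[OF C' sub S_ne[OF C] blkS2 CS[OF C]] by blast
  have t2: "is_subtree P' (quot_edges E P') X" if XP: "X \<in> Cq P' ` P" for X
  proof -
    obtain B where B: "B \<in> P" "X = Cq P' B" using XP by blast
    show ?thesis using QT[OF C' BS'[OF B(1)] part_ne[OF CP[OF C] B(1)] blkS[OF B(1)] CB[OF C B(1)]] B by simp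
  qed
  have CqB_ne: "Cq P' B \<noteq> {}" if "B \<in> P" for B using unB[OF that] part_ne[OF CP[OF C] that] by auto
  have part: "partition_on (Cq P' S) (Cq P' ` P)"
  proof (rule partition_onI)
    show "\<Union>(Cq P' ` P) = Cq P' S"
    proof (intro equalityI subsetI)
      fix X assume "X \<in> \<Union>(Cq P' ` P)"
      then obtain B where "B \<in> P" "X \<in> Cq P' B" by blast
      then show "X \<in> Cq P' S" using part_sub[OF CP[OF C]] by (auto simp: Cq_def[OF C'])
    next
      fix X assume X: "X \<in> Cq P' S"
      then have X': "X \<in> P'" "X \<subseteq> S" by (auto simp: Cq_def[OF C'])
      obtain x where x: "x \<in> X" using part_ne[OF CP[OF C'] X'(1)] by blast
      obtain B where B: "B \<in> P" "x \<in> B" using part_ex[OF CP[OF C]] x X' by blast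
      have "blk P' x = X" using blk_eq[OF C' X'(1) x] .
      then have "X \<subseteq> B" using blkS[OF B] by simp
      then show "X \<in> \<Union>(Cq P' ` P)" using B X' by (auto simp: Cq_def[OF C'])
    qed
  next
    fix X Y assume XY: "X \<in> Cq P' ` P" "Y \<in> Cq P' ` P" "X \<noteq> Y"
    then obtain B1 B2 where B: "B1 \<in> P" "B2 \<in> P" "X = Cq P' B1" "Y = Cq P' B2" by blast
    then have "B1 \<noteq> B2" using XY(3) by blast
    then have dj: "B1 \<inter> B2 = {}" using CP[OF C] B(1,2) unfolding partition_on_def pairwise_def disjnt_def by blast
    show "disjnt X Y" unfolding disjnt_def
    proof (rule ccontr)
      assume "X \<inter> Y \<noteq> {}"
      then obtain Z where "Z \<in> P'" "Z \<subseteq> B1" "Z \<subseteq> B2" using B by (auto simp: Cq_def[OF C'])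
      then show False using part_ne[OF CP[OF C'] \<open>Z \<in> P'\<close>] dj by blast
    qed
  next
    show "{} \<notin> Cq P' ` P" using CqB_ne by blast
  qed
  have isc: "is_corr P' (quot_edges E P') ?q" unfolding is_corr_def using t1 t2 part by simp
  have "Union ` Cq P' ` P = P"
  proof -
    have "Union ` Cq P' ` P = (\<lambda>B. \<Union>(Cq P' B)) ` P" by (simp add: image_image)
    also have "\<dots> = (\<lambda>B. B) ` P" using unB by (intro image_cong) auto
    finally show ?thesis by simp
  qed
  then have "(S,P) = corr_comp ?q (S',P')" using unS by (simp add: corr_comp_def)
  then show ?thesis unfolding corr_ge_def using isc by auto
qed

lemma key: "corr_ge E (S,P) (S',P') \<longleftrightarrow> S \<subseteq> S' \<and> BC"
  using key_dir1 key_dir2 by blast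

lemma INT:
  assumes "c \<in> stratum V E (S',P')" "c \<in> Cl S P"
  shows "S \<subseteq> S' \<and> BC"
proof -
  obtain \<alpha>' w' where a': "\<alpha>' \<in> S'" "w' \<in> A S' P'" "c = cls \<alpha>' w'" using stratum_cls[OF C'] assms(1) by blast
  obtain \<alpha> w where a: "\<alpha> \<in> S" "w \<in> cA S P" "c = cls \<alpha> w" using assms(2) by (auto simp: Cl_def[OF C])
  have V: "\<alpha>' \<in> V" "\<alpha> \<in> V" using a a' SV[OF C] SV[OF C'] by auto
  have ext: "w' \<in> extensional E" "w \<in> extensional E" using a'(2) a(2) by (auto simp: A_def cA_def)
  have e: "cls \<alpha>' w' = cls \<alpha> w \<longleftrightarrow> w' = w \<and> \<alpha> \<in> comp \<alpha>' w'" by (rule cls_eq[OF V(1) ext(1) V(2) ext(2)])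
  have "cls \<alpha>' w' = cls \<alpha> w" using a(3) a'(3) by simp
  then have "w' = w \<and> \<alpha> \<in> comp \<alpha>' w'" using e by blast
  then have ww: "w' = w" "\<alpha> \<in> comp \<alpha>' w" by auto
  have cS': "comp \<alpha>' w = S'" using comp_eq[OF C' a'(1)] a'(2) ww(1) by simp
  have Sc: "S \<subseteq> comp \<alpha> w" using S_sub_comp[OF C a(1,2)] .
  have "comp \<alpha> w \<subseteq> comp \<alpha>' w" using ww(2) unfolding comp_def by (auto intro: rtrancl_trans)
  then have "S \<subseteq> S'" using Sc cS' by blast
  moreover have BC unfolding BC_def
  proof (intro ballI impI)
    fix B' assume B': "B' \<in> P'" "B' \<inter> S \<noteq> {}"
    then obtain x where x: "x \<in> B'" "x \<in> S" by blast
    obtain B where B: "B \<in> P" "x \<in> B" using part_ex[OF CP[OF C] x(2)] by blast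
    have "y \<in> B" if y: "y \<in> B'" for y
    proof -
      have "(x,y) \<in> (adj (induced_edges E B'))\<^sup>*" using subtree_conn[OF CB[OF C' B'(1)] x(1) y] .
      then show "y \<in> B"
      proof (induction rule: rtrancl_induct)
        case base then show ?case using B by simp
      next
        case (step c d)
        have cd: "{c,d} \<in> E" "{c,d} \<subseteq> B'" using step(2) by (auto simp: induced_edges_def)
        then have "{c,d} \<in> In P'" using B'(1) by (auto simp: In_def)
        then have pos: "0 < w {c,d}" using a'(2) ww(1) by (auto simp: A_def)
        have cS: "c \<in> S" using step(3) part_sub[OF CP[OF C] B(1)] by blast
        have dS: "d \<in> S"
        proof (rule ccontr)
          assume "d \<notin> S"
          then have "{c,d} \<in> Ng S" using cd cS by (auto simp: Ng_def)
          then show False using pos a(2) by (auto simp: cA_def)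
        qed
        have "{c,d} \<in> In P"
        proof (rule ccontr)
          assume "{c,d} \<notin> In P"
          then have "{c,d} \<in> Zr S P" using cd cS dS by (auto simp: Zr_def)
          then show False using pos a(2) by (auto simp: cA_def)
        qed
        then obtain B'' where B'': "B'' \<in> P" "{c,d} \<subseteq> B''" by (auto simp: In_def)
        have "B'' = B" using part_uniq[OF CP[OF C] B''(1) B(1)] B'' step(3) by blast
        then show ?case using B'' by simp
      qed
    qed
    then show "\<exists>B\<in>P. B' \<subseteq> B" using B by blast
  qed
  ultimately show ?thesis by simp
qed

lemma SUB:
  assumes sub: "S \<subseteq> S'" and bc: BC
  shows "stratum V E (S',P') \<subseteq> Cl S P"
proof
  fix c assume "c \<in> stratum V E (S',P')"
  then obtain \<alpha>' w where a': "\<alpha>' \<in> S'" "w \<in> A S' P'" "c = cls \<alpha>' w" using stratum_cls[OF C'] by blast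
  obtain \<alpha> where al: "\<alpha> \<in> S" using S_ne[OF C] by blast
  have V: "\<alpha>' \<in> V" "\<alpha> \<in> V" using al a' SV[OF C] SV[OF C'] by auto
  have ext: "w \<in> extensional E" using a'(2) by (auto simp: A_def)
  have "\<alpha> \<in> comp \<alpha>' w" using comp_eq[OF C' a'(1,2)] al sub by blast
  then have ceq: "cls \<alpha>' w = cls \<alpha> w" using cls_eq[OF V(1) ext V(2) ext] by simp
  have w': "(\<forall>e\<in>In P'. 0 < w e) \<and> (\<forall>e\<in>Zr S' P'. w e = 0) \<and> (\<forall>e\<in>Ng S'. w e < 0)"
    using a'(2) by (simp add: A_def)
  have I: "0 \<le> w e" if e: "e \<in> In P" for e
  proof -
    have "e \<subseteq> S'" "e \<in> E" using In_sub[OF CP[OF C] e] sub e by (auto simp: In_def)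
    then have "e \<in> In P' \<or> e \<in> Zr S' P'" by (auto simp: Zr_def)
    then show ?thesis using w' by force
  qed
  have inP': "\<And>e. e \<in> In P' \<Longrightarrow> e \<inter> S \<noteq> {} \<Longrightarrow> e \<in> In P"
  proof -
    fix e assume e: "e \<in> In P'" "e \<inter> S \<noteq> {}"
    then obtain B' where B': "B' \<in> P'" "e \<subseteq> B'" "e \<in> E" by (auto simp: In_def)
    then have "B' \<inter> S \<noteq> {}" using e(2) by blast
    then obtain B where "B \<in> P" "B' \<subseteq> B" using bc B' unfolding BC_def by blast
    then show "e \<in> In P" using B' by (auto simp: In_def)
  qed
  have Z: "w e = 0" if e: "e \<in> Zr S P" for e
  proof -
    have e1: "e \<in> E" "e \<subseteq> S" "e \<notin> In P" using e by (auto simp: Zr_def)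
    obtain a b where ab: "e = {a,b}" "a \<noteq> b" using edgeE[OF e1(1)] by metis
    have "e \<inter> S \<noteq> {}" using e1(2) ab by auto
    then have "e \<notin> In P'" using inP' e1(3) by blast
    then have "e \<in> Zr S' P'" using e1 sub by (auto simp: Zr_def)
    then show ?thesis using w' by simp
  qed
  have N: "w e \<le> 0" if e: "e \<in> Ng S" for e
  proof -
    have e1: "e \<in> E" "e \<inter> S \<noteq> {}" "\<not> e \<subseteq> S" using e by (auto simp: Ng_def)
    have nI: "e \<notin> In P" using In_sub[OF CP[OF C]] e1(3) by blast
    show ?thesis
    proof (cases "e \<subseteq> S'")
      case True
      then have "e \<notin> In P'" using inP' e1(2) nI by blast
      then have "e \<in> Zr S' P'" using True e1 by (auto simp: Zr_def)
      then show ?thesis using w' by simp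
    next
      case False
      then have "e \<in> Ng S'" using e1 sub by (auto simp: Ng_def)
      then show ?thesis using w' less_imp_le by blast
    qed
  qed
  have "w \<in> cA S P" using I Z N ext by (simp add: cA_def)
  then show "c \<in> Cl S P" using al a'(3) ceq by (auto simp: Cl_def[OF C])
qed

end

lemma NE:
  assumes C': "is_corr V E (S',P')"
  shows "stratum V E (S',P') \<noteq> {}"
proof -
  define w0 :: "'v set \<Rightarrow> real" where "w0 = (\<lambda>e. if e \<in> E then (if e \<in> In P' then 1 else if e \<in> Zr S' P' then 0
      else if e \<in> Ng S' then -1 else 0) else undefined)"
  have "w0 \<in> A S' P'"
    unfolding A_def w0_def using disj[OF C'] by (auto simp: In_def Zr_def Ng_def extensional_def)
  moreover obtain \<alpha> where "\<alpha> \<in> S'" using S_ne[OF C'] by blast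
  ultimately have "cls \<alpha> w0 \<in> stratum V E (S',P')" using stratum_cls[OF C'] by blast
  then show ?thesis by blast
qed

end

theorem proposition2p18:
  fixes V :: "'v set" and E :: "'v set set"
    and p p' :: "'v set \<times> 'v set set"
  assumes "is_tree V E"
    and "is_corr V E p" and "is_corr V E p'"
  shows "(corr_ge E p p' \<longleftrightarrow>
            stratum V E p' \<inter> (arb_space V E closure_of stratum V E p) \<noteq> {})
       \<and> (corr_ge E p p' \<longrightarrow> stratum V E p' \<subseteq> arb_space V E closure_of stratum V E p)"
proof -
  interpret tr V E by (rule tr.intro[OF assms(1)])
  obtain S P where p: "p = (S,P)" by (cases p)
  obtain S' P' where p': "p' = (S',P')" by (cases p')
  have C: "is_corr V E (S,P)" and C': "is_corr V E (S',P')" using assms p p' by auto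
  have cl: "arb_space V E closure_of stratum V E (S,P) = Cl S P" using closure_eq[OF C] .
  have k: "corr_ge E (S,P) (S',P') \<longleftrightarrow> S \<subseteq> S' \<and> BC S P P'" using key[OF C C'] .
  have 1: "corr_ge E (S,P) (S',P') \<Longrightarrow> stratum V E (S',P') \<subseteq> Cl S P" using k SUB[OF C C'] by blast
  have 2: "stratum V E (S',P') \<inter> Cl S P \<noteq> {} \<Longrightarrow> corr_ge E (S,P) (S',P')" using k INT[OF C C'] by blast
  have 3: "stratum V E (S',P') \<noteq> {}" using NE[OF C'] .
  show ?thesis unfolding p p' cl using 1 2 3 by blast
qed


end
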